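(* Let $I$ be a nontrivial real interval (nonempty and not a singleton) and let $n\ge 2$ be an integer. A function $f\colon I^n\to I$ is continuous, symmetric, cancellative, and associative if and only if there exists a continuous and strictly monotonic function $\varphi\colon I\to J$ such that $$f(x_1,\dots,x_n)=\varphi^{-1}\Big(\sum_{i=1}^n \varphi(x_i)\Big)\quad\text{for all }x_1,\dots,x_n\in I,$$ where $J$ is a real interval of one of the forms $]-\infty,b[$, $]-\infty,b]$, $]a,\infty[$, $[a,\infty[$, or $\mathbb{R}=]-\infty,\infty[$, with $b\le 0\le a$. Moreover, for such a function $f$, the interval $I$ is necessarily open at least at one end, and $\varphi$ can be chosen to be strictly increasing; in other words, the $n$-ary semigroup $(I,f)$ is topologically order-isomorphic to the $n$-ary semigroup $(J,+)$.
   Context: A function $f\colon I^n\to I$ is associative if for each $i=1,\dots,n-1$ and all $x_1,\dots,x_{2n-1}\in I$: $f(x_1,\dots,x_{i-1},f(x_i,\dots,x_{i+n-1}),x_{i+n},\dots,x_{2n-1})=f(x_1,\dots,x_i,f(x_{i+1},\dots,x_{i+n}),x_{i+n+1},\dots,x_{2n-1})$; the pair $(I,f)$ is then called an $n$-ary semigroup. $f$ is cancellative if it is one-to-one in each variable: for every $k\in\{1,\dots,n\}$ and $\mathbf{x},\mathbf{x}'\in I^n$, if $x_i=x'_i$ for all $i\ne k$ and $f(\mathbf{x})=f(\mathbf{x}')$, then $x_k=x'_k$. $f$ is symmetric if $f(x_1,\dots,x_n)=f(x_{\sigma(1)},\dots,x_{\sigma(n)})$ for every permutation $\sigma$ of $\{1,\dots,n\}$.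 *)

theory Defs
  imports "HOL-Analysis.Analysis"
begin

text \<open>An n-ary operation on I is modelled as a function on real lists; only its
values on lists of length n with entries in I (the points of I^n) matter.\<close>

definition tuples :: "real set \<Rightarrow> nat \<Rightarrow> real list set" where
  "tuples I n = {xs. length xs = n \<and> set xs \<subseteq> I}"

definition maps_into :: "real set \<Rightarrow> nat \<Rightarrow> (real list \<Rightarrow> real) \<Rightarrow> bool" where
  "maps_into I n f \<longleftrightarrow> (\<forall>xs\<in>tuples I n. f xs \<in> I)"

definition continuous_nary :: "real set \<Rightarrow> nat \<Rightarrow> (real list \<Rightarrow> real) \<Rightarrow> bool" where
  "continuous_nary I n f \<longleftrightarrow>
     (\<forall>xs\<in>tuples I n. \<forall>e>0. \<exists>d>0. \<forall>ys\<in>tuples I n.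
        (\<forall>i<n. \<bar>ys ! i - xs ! i\<bar> < d) \<longrightarrow> \<bar>f ys - f xs\<bar> < e)"

definition symmetric_nary :: "real set \<Rightarrow> nat \<Rightarrow> (real list \<Rightarrow> real) \<Rightarrow> bool" where
  "symmetric_nary I n f \<longleftrightarrow>
     (\<forall>xs\<in>tuples I n. \<forall>\<sigma>. \<sigma> permutes {..<n} \<longrightarrow> f (map (\<lambda>i. xs ! \<sigma> i) [0..<n]) = f xs)"

definition cancellative_nary :: "real set \<Rightarrow> nat \<Rightarrow> (real list \<Rightarrow> real) \<Rightarrow> bool" where
  "cancellative_nary I n f \<longleftrightarrow>
     (\<forall>k<n. \<forall>xs\<in>tuples I n. \<forall>ys\<in>tuples I n.
        (\<forall>i<n. i \<noteq> k \<longrightarrow> xs ! i = ys ! i) \<and> f xs = f ys \<longrightarrow> xs ! k = ys ! k)"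

text \<open>Associativity; indices are 0-based: position i (0 \<le> i < n-1) vs position i+1.\<close>
definition associative_nary :: "real set \<Rightarrow> nat \<Rightarrow> (real list \<Rightarrow> real) \<Rightarrow> bool" where
  "associative_nary I n f \<longleftrightarrow>
     (\<forall>i. i < n - 1 \<longrightarrow> (\<forall>xs\<in>tuples I (2 * n - 1).
        f (take i xs @ [f (take n (drop i xs))] @ drop (i + n) xs)
      = f (take (Suc i) xs @ [f (take n (drop (Suc i) xs))] @ drop (Suc i + n) xs)))"

definition admissible_J :: "real set \<Rightarrow> bool" where
  "admissible_J J \<longleftrightarrow>
     (\<exists>b\<le>0. J = {..<b} \<or> J = {..b}) \<or> (\<exists>a\<ge>0. J = {a<..} \<or> J = {a..}) \<or> J = UNIV"

definition represents :: "real set \<Rightarrow> nat \<Rightarrow> (real list \<Rightarrow> real) \<Rightarrow> (real \<Rightarrow> real) \<Rightarrow> real set \<Rightarrow> bool" where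
  "represents I n f \<phi> J \<longleftrightarrow>
     admissible_J J \<and> continuous_on I \<phi> \<and> bij_betw \<phi> I J \<and>
     (\<forall>xs\<in>tuples I n. f xs = inv_into I \<phi> (sum_list (map \<phi> xs)))"

end

theory Submission
  imports Defs
begin

locale possg =
  fixes I :: "real set" and g :: "real \<Rightarrow> real \<Rightarrow> real" and u :: real
  assumes iv: "is_interval I"
    and cl: "\<And>x y. x\<in>I \<Longrightarrow> y\<in>I \<Longrightarrow> g x y \<in> I"
    and cm: "\<And>x y. x\<in>I \<Longrightarrow> y\<in>I \<Longrightarrow> g x y = g y x"
    and as: "\<And>x y z. x\<in>I \<Longrightarrow> y\<in>I \<Longrightarrow> z\<in>I \<Longrightarrow> g (g x y) z = g x (g y z)"
    and mo: "\<And>x y z. x\<in>I \<Longrightarrow> y\<in>I \<Longrightarrow> z\<in>I \<Longrightarrow> x < y \<Longrightarrow> g x z < g y z"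
    and ct: "continuous_on (I\<times>I) (\<lambda>p. g (fst p) (snd p))"
    and uI: "u \<in> I"
    and up: "\<And>z. z\<in>I \<Longrightarrow> z < g z u"
begin

lemma mo2: "x\<in>I \<Longrightarrow> y\<in>I \<Longrightarrow> z\<in>I \<Longrightarrow> x < y \<Longrightarrow> g z x < g z y"
  using mo cm by metis

lemma le1: "x\<in>I \<Longrightarrow> y\<in>I \<Longrightarrow> z\<in>I \<Longrightarrow> g x z \<le> g y z \<longleftrightarrow> x \<le> y"
  using mo by (metis linorder_not_le order_less_imp_le order.strict_iff_order)

lemma le2: "x\<in>I \<Longrightarrow> y\<in>I \<Longrightarrow> z\<in>I \<Longrightarrow> g z x \<le> g z y \<longleftrightarrow> x \<le> y"
  using le1 cm by metis

lemma lt1: "x\<in>I \<Longrightarrow> y\<in>I \<Longrightarrow> z\<in>I \<Longrightarrow> g x z < g y z \<longleftrightarrow> x < y"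
  using le1 by (meson linorder_not_le)

lemma mono2: "a\<in>I \<Longrightarrow> b\<in>I \<Longrightarrow> c\<in>I \<Longrightarrow> d\<in>I \<Longrightarrow> a \<le> b \<Longrightarrow> c \<le> d \<Longrightarrow> g a c \<le> g b d"
  by (meson cl le1 le2 order_trans)

lemma smono2: "a\<in>I \<Longrightarrow> b\<in>I \<Longrightarrow> c\<in>I \<Longrightarrow> d\<in>I \<Longrightarrow> a < b \<Longrightarrow> c < d \<Longrightarrow> g a c < g b d"
  by (meson cl mo mo2 order.strict_trans)

lemma swap4: "a\<in>I \<Longrightarrow> b\<in>I \<Longrightarrow> c\<in>I \<Longrightarrow> d\<in>I \<Longrightarrow> g (g a b) (g c d) = g (g a c) (g b d)"
  by (metis as cm cl)

fun pw :: "real \<Rightarrow> nat \<Rightarrow> real" where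
  "pw x 0 = x" | "pw x (Suc 0) = x" | "pw x (Suc (Suc k)) = g (pw x (Suc k)) x"

lemma pw_I: "x\<in>I \<Longrightarrow> pw x k \<in> I"
  by (induction x k rule: pw.induct) (auto intro: cl)

lemma pw_Suc: "k \<ge> 1 \<Longrightarrow> pw x (Suc k) = g (pw x k) x"
  by (cases k) auto

lemma pw_1[simp]: "pw x 1 = x" by simp

lemma pw_add: assumes "x\<in>I" "a\<ge>1" "b\<ge>1" shows "g (pw x a) (pw x b) = pw x (a+b)"
  using assms(3) proof (induction b rule: nat_induct_at_least)
  case base then show ?case using pw_Suc[of a x] assms by simp
next
  case (Suc b)
  have "g (pw x a) (pw x (Suc b)) = g (pw x a) (g (pw x b) x)" using Suc pw_Suc by simp
  also have "\<dots> = g (g (pw x a) (pw x b)) x" using as[of "pw x a" "pw x b" x] pw_I assms by simp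
  also have "\<dots> = pw x (Suc (a+b))" using Suc pw_Suc[of "a+b" x] assms by simp
  finally show ?case by simp
qed

lemma pw_mult: assumes "x\<in>I" "a\<ge>1" "b\<ge>1" shows "pw (pw x a) b = pw x (a*b)"
  using assms(3) proof (induction b rule: nat_induct_at_least)
  case base then show ?case by simp
next
  case (Suc b)
  have "pw (pw x a) (Suc b) = g (pw (pw x a) b) (pw x a)" using Suc pw_Suc by simp
  also have "\<dots> = pw x (a*b + a)" using Suc pw_add[of x "a*b" a] assms by simp
  finally show ?case by (simp add: add.commute)
qed

lemma pw_g: assumes "x\<in>I" "y\<in>I" "k\<ge>1" shows "pw (g x y) k = g (pw x k) (pw y k)"
  using assms(3) proof (induction k rule: nat_induct_at_least)
  case base then show ?case by simp
next
  case (Suc k)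
  have "pw (g x y) (Suc k) = g (g (pw x k) (pw y k)) (g x y)" using Suc pw_Suc by simp
  also have "\<dots> = g (g (pw x k) x) (g (pw y k) y)" using swap4 pw_I assms by simp
  finally show ?case using Suc pw_Suc by simp
qed

lemma pw_smono: assumes "x\<in>I" "y\<in>I" "x < y" "k\<ge>1" shows "pw x k < pw y k"
  using assms(4) proof (induction k rule: nat_induct_at_least)
  case base then show ?case using assms by simp
next
  case (Suc k)
  then show ?case using pw_Suc smono2 pw_I assms by simp
qed

lemma pw_mono: "x\<in>I \<Longrightarrow> y\<in>I \<Longrightarrow> x \<le> y \<Longrightarrow> k\<ge>1 \<Longrightarrow> pw x k \<le> pw y k"
  using pw_smono by (cases "x = y") (auto simp: order_less_imp_le)

lemma pwu_smono: assumes "a\<ge>1" "a < b" shows "pw u a < pw u b"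
proof -
  have "b \<ge> Suc a" using assms by simp
  then show ?thesis
proof (induction b rule: nat_induct_at_least)
  case base then show ?case using pw_Suc up pw_I uI assms by simp
next
  case (Suc b)
  have "pw u b < pw u (Suc b)" using Suc pw_Suc up pw_I uI by simp
  then show ?case using Suc by (cases "Suc a < Suc b") auto
qed
qed

lemma pwu_mono: "a\<ge>1 \<Longrightarrow> a \<le> b \<Longrightarrow> pw u a \<le> pw u b"
  using pwu_smono by (cases "a = b") (auto simp: order_less_imp_le)

lemma g_cont: "continuous_on S a \<Longrightarrow> continuous_on S b \<Longrightarrow> a ` S \<subseteq> I \<Longrightarrow> b ` S \<subseteq> I
   \<Longrightarrow> continuous_on S (\<lambda>x. g (a x) (b x))"
  using continuous_on_compose2[OF ct continuous_on_Pair, of S a b] by auto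

lemma pw_cont: "continuous_on I (\<lambda>x. pw x k)"
proof (induction k rule: nat.induct)
  case zero then show ?case by (simp add: continuous_on_id)
next
  case (Suc k)
  then show ?case
  proof (cases k)
    case 0 then show ?thesis by (simp add: continuous_on_id)
  next
    case (Suc k')
    then show ?thesis using g_cont[OF Suc.IH continuous_on_id] pw_I by auto
  qed
qed

lemma cont1: "z\<in>I \<Longrightarrow> continuous_on I (\<lambda>x. g x z)"
  using g_cont[OF continuous_on_id continuous_on_const] by auto

lemma arch: assumes t: "t\<in>I" and x: "x\<in>I" shows "\<exists>b\<ge>1. x < g t (pw u b)"
proof (rule ccontr)
  assume "\<not> ?thesis"
  then have H: "\<And>b. b\<ge>1 \<Longrightarrow> g t (pw u b) \<le> x" by force
  define s where "s b = g t (pw u (Suc b))" for b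
  have sI: "s b \<in> I" for b unfolding s_def using cl t pw_I uI by simp
  have sS: "s (Suc b) = g (s b) u" for b
    unfolding s_def using pw_Suc[of "Suc b" u] as[of t "pw u (Suc b)" u] t pw_I uI by simp
  have inc: "incseq s" by (rule incseq_SucI) (simp add: sS up sI less_imp_le)
  have bd: "s b \<le> x" for b unfolding s_def using H by simp
  then have bdd: "bdd_above (range s)" by (intro bdd_aboveI[of _ x]) auto
  define L where "L = (SUP i. s i)"
  have lim: "s \<longlonglongrightarrow> L" unfolding L_def by (rule LIMSEQ_incseq_SUP[OF bdd inc])
  have "s 0 \<le> L" unfolding L_def by (rule cSUP_upper[OF _ bdd]) simp
  moreover have "L \<le> x" unfolding L_def by (rule cSUP_least) (auto simp: bd)
  ultimately have LI: "L \<in> I" using iv sI x unfolding is_interval_1 by blast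
  have "(\<lambda>b. g (s b) u) \<longlonglongrightarrow> g L u"
    by (rule continuous_on_tendsto_compose[OF cont1[OF uI] lim LI]) (simp add: sI)
  moreover have "(\<lambda>b. g (s b) u) \<longlonglongrightarrow> L"
    using lim unfolding sS[symmetric] by (rule LIMSEQ_Suc)
  ultimately have "g L u = L" by (rule LIMSEQ_unique)
  then show False using up[OF LI] by simp
qed

definition A :: "nat \<Rightarrow> int \<Rightarrow> real \<Rightarrow> nat \<Rightarrow> bool" where
  "A k m x j \<longleftrightarrow> pw u (nat (m + int j)) \<le> g (pw x k) (pw u j)"

definition Cr :: "nat \<Rightarrow> int \<Rightarrow> real \<Rightarrow> bool" where
  "Cr k m x \<longleftrightarrow> (\<exists>j::nat. j \<ge> 1 \<and> m + int j \<ge> 1 \<and> A k m x j)"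

lemma A_Suc: assumes "x\<in>I" "j\<ge>1" "m + int j \<ge> 1"
  shows "A k m x (Suc j) \<longleftrightarrow> A k m x j"
proof -
  have e1: "nat (m + int (Suc j)) = Suc (nat (m + int j))" using assms by simp
  have "pw u (nat (m + int (Suc j))) = g (pw u (nat (m + int j))) u"
    unfolding e1 using assms by (intro pw_Suc) simp
  moreover have "g (pw x k) (pw u (Suc j)) = g (g (pw x k) (pw u j)) u"
    using pw_Suc[of j u] assms as[of "pw x k" "pw u j" u] pw_I uI by simp
  ultimately show ?thesis unfolding A_def using le1 pw_I uI cl assms by simp
qed

lemma A_shift: assumes "x\<in>I" "j\<ge>1" "m + int j \<ge> 1"
  shows "A k m x (j + d) \<longleftrightarrow> A k m x j"
proof (induction d)
  case 0 then show ?case by simp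
next
  case (Suc d) then show ?case using A_Suc[of x "j+d" m k] assms by simp
qed

lemma Cr_iff: assumes "x\<in>I" "j\<ge>1" "m + int j \<ge> 1"
  shows "Cr k m x \<longleftrightarrow> A k m x j"
proof
  assume "Cr k m x"
  then obtain j' where j': "j' \<ge> 1" "m + int j' \<ge> 1" "A k m x j'" unfolding Cr_def by blast
  show "A k m x j"
  proof (cases "j \<le> j'")
    case True
    then show ?thesis using A_shift[OF assms, of k "j' - j"] j' by simp
  next
    case False
    then show ?thesis using A_shift[OF assms(1) j'(1,2), of k "j - j'"] j' by simp
  qed
next
  assume "A k m x j" then show "Cr k m x" unfolding Cr_def using assms by blast
qed

lemma A_valid: "\<exists>j. j\<ge>(1::nat) \<and> m + int j \<ge> 1 \<and> j \<ge> j0"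
  by (rule exI[of _ "max (max 1 j0) (nat (1 - m))"]) auto

lemma Cr_down: assumes "x\<in>I" "k\<ge>1" "Cr k m x" "m' \<le> m" shows "Cr k m' x"
proof -
  obtain j where j: "j\<ge>1" "m' + int j \<ge> 1" using A_valid by blast
  then have "A k m x j" using Cr_iff[of x j m k] assms by simp
  moreover have "pw u (nat (m' + int j)) \<le> pw u (nat (m + int j))"
    using j assms by (intro pwu_mono) auto
  ultimately have "A k m' x j" unfolding A_def by simp
  then show ?thesis using Cr_iff j assms by blast
qed

lemma Cr_ex: assumes "x\<in>I" "k\<ge>1" shows "\<exists>m. Cr k m x"
proof -
  obtain b where b: "b\<ge>1" "u < g (pw x k) (pw u b)" using arch[OF pw_I[OF assms(1)] uI] by blast
  have "A k (1 - int b) x b" unfolding A_def using b by simp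
  then show ?thesis unfolding Cr_def using b by (intro exI[of _ "1 - int b"] exI[of _ b]) simp
qed

lemma Cr_bd: assumes "x\<in>I" "k\<ge>1" shows "\<exists>m. \<not> Cr k m x"
proof -
  obtain b where b: "b\<ge>1" "g (pw x k) u < g u (pw u b)"
    using arch[OF uI cl[OF pw_I[OF assms(1)] uI]] by blast
  have "g u (pw u b) = pw u (Suc b)" using pw_add[OF uI, of 1 b] b by simp
  moreover have "nat (int b + 1) = Suc b" by simp
  ultimately have "\<not> A k (int b) x 1" unfolding A_def using b by simp
  then show ?thesis using Cr_iff[OF assms(1), of 1 "int b" k] by auto
qed

lemma Cr_step: assumes "x\<in>I" "k\<ge>1" shows "\<exists>m. Cr k m x \<and> \<not> Cr k (m+1) x"
proof (rule ccontr)
  assume H: "\<not> ?thesis"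
  obtain m0 where m0: "Cr k m0 x" using Cr_ex assms by blast
  obtain m1 where m1: "\<not> Cr k m1 x" using Cr_bd assms by blast
  have "Cr k (m0 + int d) x" for d
  proof (induction d)
    case 0 then show ?case using m0 by simp
  next
    case (Suc d) then show ?case using H by (metis add.assoc add.commute of_nat_Suc)
  qed
  from this[of "nat (m1 - m0)"] have "Cr k (max m0 m1) x" by (cases "m0 \<le> m1") (auto simp: max_def)
  then have "Cr k m1 x" using Cr_down assms by simp
  then show False using m1 by simp
qed

lemma A_valid2: "\<exists>j. j\<ge>(1::nat) \<and> m + int j \<ge> 1 \<and> m' + int j \<ge> 1"
  by (rule exI[of _ "max (max 1 (nat (1 - m))) (nat (1 - m'))"]) auto

lemma H1: assumes "x\<in>I" "k\<ge>1" "l\<ge>1" "Cr k m x" shows "Cr (k*l) (m*int l) x"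
proof -
  obtain j where j: "j\<ge>1" "m + int j \<ge> 1" "A k m x j" using assms unfolding Cr_def by blast
  have "pw (pw u (nat (m + int j))) l \<le> pw (g (pw x k) (pw u j)) l"
    using j assms pw_I uI cl by (intro pw_mono) (auto simp: A_def)
  moreover have "pw (pw u (nat (m + int j))) l = pw u (nat (m + int j) * l)"
    using j assms uI by (intro pw_mult) auto
  moreover have "pw (g (pw x k) (pw u j)) l = g (pw x (k*l)) (pw u (j*l))"
    using pw_g[of "pw x k" "pw u j" l] pw_mult assms j pw_I uI by simp
  moreover have "nat (m + int j) * l = nat (m * int l + int (j*l))"
  proof -
    have "m * int l + int (j*l) = (m + int j) * int l" by (simp add: algebra_simps)
    then show ?thesis using j by (simp add: nat_mult_distrib)
  qed
  ultimately have "A (k*l) (m * int l) x (j*l)" unfolding A_def by simp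
  moreover have "j*l \<ge> 1" using j assms by simp
  moreover have "m * int l + int (j*l) \<ge> 1"
  proof -
    have "m * int l + int (j*l) = (m + int j) * int l" by (simp add: algebra_simps)
    moreover have "(m + int j) * int l \<ge> 1 * 1" using j assms by (intro mult_mono) auto
    ultimately show ?thesis by simp
  qed
  ultimately show ?thesis unfolding Cr_def by blast
qed

lemma H2: assumes "x\<in>I" "k\<ge>1" "l\<ge>1" "\<not> Cr k m x" shows "\<not> Cr (k*l) (m*int l) x"
proof -
  obtain j where j: "j\<ge>1" "m + int j \<ge> 1" using A_valid by blast
  have nA: "g (pw x k) (pw u j) < pw u (nat (m + int j))"
    using Cr_iff[OF assms(1) j, of k] assms unfolding A_def by simp
  have "pw (g (pw x k) (pw u j)) l < pw (pw u (nat (m + int j))) l"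
    using nA j assms pw_I uI cl by (intro pw_smono) auto
  moreover have "pw (pw u (nat (m + int j))) l = pw u (nat (m + int j) * l)"
    using j assms uI by (intro pw_mult) auto
  moreover have "pw (g (pw x k) (pw u j)) l = g (pw x (k*l)) (pw u (j*l))"
    using pw_g[of "pw x k" "pw u j" l] pw_mult assms j pw_I uI by simp
  moreover have e: "m * int l + int (j*l) = (m + int j) * int l" by (simp add: algebra_simps)
  moreover have "nat (m + int j) * l = nat (m * int l + int (j*l))"
    using e j by (simp add: nat_mult_distrib)
  ultimately have "\<not> A (k*l) (m * int l) x (j*l)" unfolding A_def by simp
  moreover have "j*l \<ge> 1" using j assms by simp
  moreover have "m * int l + int (j*l) \<ge> 1"
  proof -
    have "(m + int j) * int l \<ge> 1 * 1" using j assms by (intro mult_mono) auto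
    then show ?thesis using e by simp
  qed
  ultimately show ?thesis using Cr_iff[OF assms(1)] by blast
qed

lemma Cmp: assumes "x\<in>I" "k\<ge>1" "k'\<ge>1" "Cr k m x" "\<not> Cr k' m' x"
  shows "real_of_int m / real k < real_of_int m' / real k'"
proof -
  have a: "Cr (k*k') (m * int k') x" using H1 assms by simp
  have b: "\<not> Cr (k*k') (m' * int k) x" using H2[OF assms(1,3,2,5)] by (simp add: mult.commute)
  have "m * int k' < m' * int k"
  proof (rule ccontr)
    assume "\<not> ?thesis"
    then have "Cr (k*k') (m' * int k) x" using Cr_down[OF assms(1) _ a] assms by simp
    then show False using b by simp
  qed
  then have "real_of_int m * real k' < real_of_int m' * real k"
    by (metis of_int_less_iff of_int_mult of_int_of_nat_eq)
  then show ?thesis using assms by (simp add: divide_simps)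
qed

definition psi :: "real \<Rightarrow> real" where
  "psi x = Sup {real_of_int m / real k | m k. k \<ge> 1 \<and> Cr k m x}"

lemma psi_set_bdd: assumes "x\<in>I" shows "bdd_above {real_of_int m / real k | m k. k \<ge> 1 \<and> Cr k m x}"
proof -
  obtain m1 where m1: "\<not> Cr 1 m1 x" using Cr_bd assms by blast
  show ?thesis
    by (rule bdd_aboveI[of _ "real_of_int m1"]) (use Cmp[OF assms _ _ _ m1] in \<open>force simp: less_imp_le\<close>)
qed

lemma P1: assumes "x\<in>I" "k\<ge>1" "Cr k m x" shows "real_of_int m / real k \<le> psi x"
  unfolding psi_def by (rule cSup_upper[OF _ psi_set_bdd[OF assms(1)]]) (use assms in blast)

lemma P2: assumes "x\<in>I" "k\<ge>1" "\<not> Cr k m x" shows "psi x \<le> real_of_int m / real k"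
  unfolding psi_def
proof (rule cSup_least)
  obtain m0 where "Cr 1 m0 x" using Cr_ex assms by blast
  then show "{real_of_int m / real k | m k. k \<ge> 1 \<and> Cr k m x} \<noteq> {}" by force
next
  fix r assume "r \<in> {real_of_int m / real k | m k. k \<ge> 1 \<and> Cr k m x}"
  then show "r \<le> real_of_int m / real k" using Cmp[OF assms(1) _ assms(2) _ assms(3)] by (force simp: less_imp_le)
qed

lemma psi_approx: assumes "x\<in>I" "k\<ge>1"
  obtains m where "Cr k m x" "\<not> Cr k (m+1) x"
    "real_of_int m / real k \<le> psi x" "psi x \<le> real_of_int m / real k + 1 / real k"
proof -
  obtain m where m: "Cr k m x" "\<not> Cr k (m+1) x" using Cr_step assms by blast
  have "psi x \<le> real_of_int (m+1) / real k" using P2 m assms by blast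
  also have "\<dots> = real_of_int m / real k + 1 / real k" by (simp add: add_divide_distrib)
  finally show ?thesis using that m P1 assms by blast
qed

lemma Cadd: assumes "x\<in>I" "y\<in>I" "k\<ge>1" "Cr k m x" "Cr k m' y" shows "Cr k (m+m') (g x y)"
proof -
  obtain j where j: "j\<ge>1" "m + int j \<ge> 1" "m' + int j \<ge> 1" using A_valid2 by blast
  have a: "pw u (nat (m + int j)) \<le> g (pw x k) (pw u j)" using Cr_iff[OF assms(1) j(1,2)] assms unfolding A_def by simp
  have b: "pw u (nat (m' + int j)) \<le> g (pw y k) (pw u j)" using Cr_iff[OF assms(2) j(1,3)] assms unfolding A_def by simp
  have "g (pw u (nat (m + int j))) (pw u (nat (m' + int j))) \<le> g (g (pw x k) (pw u j)) (g (pw y k) (pw u j))"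
    using a b by (intro mono2) (auto intro!: cl pw_I assms uI)
  moreover have "g (pw u (nat (m + int j))) (pw u (nat (m' + int j))) = pw u (nat (m + m' + int (j+j)))"
  proof -
    have "nat (m + int j) + nat (m' + int j) = nat (m + m' + int (j+j))" using j by simp
    then show ?thesis using pw_add[OF uI, of "nat (m + int j)" "nat (m' + int j)"] j by simp
  qed
  moreover have "g (g (pw x k) (pw u j)) (g (pw y k) (pw u j)) = g (pw (g x y) k) (pw u (j+j))"
    using swap4[of "pw x k" "pw u j" "pw y k" "pw u j"] pw_g[OF assms(1,2,3)] pw_add[OF uI j(1) j(1)]
      assms pw_I uI by simp
  ultimately have "A k (m+m') (g x y) (j+j)" unfolding A_def by simp
  then show ?thesis unfolding Cr_def using j by (intro exI[of _ "j+j"]) auto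
qed

lemma Cadd2: assumes "x\<in>I" "y\<in>I" "k\<ge>1" "\<not> Cr k (m+1) x" "\<not> Cr k (m'+1) y"
  shows "\<not> Cr k (m+m'+2) (g x y)"
proof -
  obtain j where j: "j\<ge>1" "m + 1 + int j \<ge> 1" "m' + 1 + int j \<ge> 1" using A_valid2 by blast
  have a: "g (pw x k) (pw u j) < pw u (nat (m + 1 + int j))" using Cr_iff[OF assms(1) j(1,2)] assms unfolding A_def by simp
  have b: "g (pw y k) (pw u j) < pw u (nat (m' + 1 + int j))" using Cr_iff[OF assms(2) j(1,3)] assms unfolding A_def by simp
  have "g (g (pw x k) (pw u j)) (g (pw y k) (pw u j)) < g (pw u (nat (m + 1 + int j))) (pw u (nat (m' + 1 + int j)))"
    using a b by (intro smono2) (auto intro!: cl pw_I assms uI)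
  moreover have "g (pw u (nat (m + 1 + int j))) (pw u (nat (m' + 1 + int j))) = pw u (nat (m + m' + 2 + int (j+j)))"
  proof -
    have "nat (m + 1 + int j) + nat (m' + 1 + int j) = nat (m + m' + 2 + int (j+j))" using j by simp
    then show ?thesis using pw_add[OF uI, of "nat (m + 1 + int j)" "nat (m' + 1 + int j)"] j by simp
  qed
  moreover have "g (g (pw x k) (pw u j)) (g (pw y k) (pw u j)) = g (pw (g x y) k) (pw u (j+j))"
    using swap4[of "pw x k" "pw u j" "pw y k" "pw u j"] pw_g[OF assms(1,2,3)] pw_add[OF uI j(1) j(1)]
      assms pw_I uI by simp
  ultimately have "\<not> A k (m+m'+2) (g x y) (j+j)" unfolding A_def by simp
  moreover have "m+m'+2 + int (j+j) \<ge> 1" using j by simp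
  ultimately show ?thesis using Cr_iff[OF cl[OF assms(1,2)], of "j+j" "m+m'+2" k] j by auto
qed

lemma small_zero: fixes a :: real assumes "\<And>k::nat. k\<ge>1 \<Longrightarrow> \<bar>a\<bar> \<le> 2 / real k" shows "a = 0"
proof (rule ccontr)
  assume "a \<noteq> 0"
  then have p: "\<bar>a\<bar> > 0" by simp
  obtain k :: nat where k: "real k > 2 / \<bar>a\<bar>" using reals_Archimedean2 by blast
  then have k1: "k \<ge> 1" using p by (metis divide_pos_pos less_numeral_extra(3) less_one not_less of_nat_0 zero_less_numeral order.strict_trans nat_less_le)
  have "real k * \<bar>a\<bar> > 2" using k p by (simp add: divide_less_eq)
  moreover have "\<bar>a\<bar> * real k \<le> 2" using assms[OF k1] k1 by (simp add: le_divide_eq)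
  ultimately show False by (simp add: mult.commute)
qed

lemma lin_help: fixes P X Y a b e s s2 :: real
  assumes "s \<le> P" "P \<le> s2" "a \<le> X" "X \<le> a + e" "b \<le> Y" "Y \<le> b + e" "s = a + b" "s2 = a + b + 2*e"
  shows "\<bar>P - (X+Y)\<bar> \<le> 2*e"
  using assms by linarith

lemma psi_add: assumes "x\<in>I" "y\<in>I" shows "psi (g x y) = psi x + psi y"
proof -
  have "\<bar>psi (g x y) - (psi x + psi y)\<bar> \<le> 2 / real k" if k: "k\<ge>1" for k
  proof -
    obtain m where m: "Cr k m x" "\<not> Cr k (m+1) x"
      "real_of_int m / real k \<le> psi x" "psi x \<le> real_of_int m / real k + 1 / real k"
      using psi_approx[OF assms(1) k] by blast
    obtain m' where m': "Cr k m' y" "\<not> Cr k (m'+1) y"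
      "real_of_int m' / real k \<le> psi y" "psi y \<le> real_of_int m' / real k + 1 / real k"
      using psi_approx[OF assms(2) k] by blast
    have a: "real_of_int (m+m') / real k \<le> psi (g x y)"
      using P1[OF cl[OF assms] k Cadd[OF assms k m(1) m'(1)]] .
    have b: "psi (g x y) \<le> real_of_int (m+m'+2) / real k"
      using P2[OF cl[OF assms] k Cadd2[OF assms k m(2) m'(2)]] .
    have c: "real_of_int (m+m') / real k = real_of_int m / real k + real_of_int m' / real k"
      by (simp add: add_divide_distrib)
    have d: "real_of_int (m+m'+2) / real k = real_of_int m / real k + real_of_int m' / real k + 2 * (1 / real k)"
      by (simp add: add_divide_distrib)
    have "\<bar>psi (g x y) - (psi x + psi y)\<bar> \<le> 2 * (1 / real k)"
      by (rule lin_help[OF a b m(3,4) m'(3,4) c d])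
    then show ?thesis by simp
  qed
  then show ?thesis using small_zero[of "psi (g x y) - (psi x + psi y)"] by simp
qed

lemma psi_mono: assumes "x\<in>I" "y\<in>I" "x \<le> y" shows "psi x \<le> psi y"
  unfolding psi_def[of x]
proof (rule cSup_least)
  obtain m0 where "Cr 1 m0 x" using Cr_ex assms by blast
  then show "{real_of_int m / real k | m k. k \<ge> 1 \<and> Cr k m x} \<noteq> {}" by force
next
  fix r assume "r \<in> {real_of_int m / real k | m k. k \<ge> 1 \<and> Cr k m x}"
  then obtain m k where r: "r = real_of_int m / real k" "k\<ge>1" "Cr k m x" by blast
  then obtain j where j: "j\<ge>1" "m + int j \<ge> 1" "A k m x j" unfolding Cr_def by blast
  have "g (pw x k) (pw u j) \<le> g (pw y k) (pw u j)"
    using assms r pw_mono by (intro mono2) (auto intro: pw_I uI)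
  then have "A k m y j" using j(3) unfolding A_def by simp
  then have "Cr k m y" unfolding Cr_def using j by blast
  then show "r \<le> psi y" using P1 r assms by simp
qed

lemma psi_u: "psi u \<ge> 1"
proof -
  have "A 1 1 u 1" unfolding A_def using pw_Suc[of 1 u] by (simp add: numeral_2_eq_2)
  then have "Cr 1 1 u" unfolding Cr_def by force
  then show ?thesis using P1[OF uI, of 1 1] by simp
qed

lemma cont2: "z\<in>I \<Longrightarrow> continuous_on I (\<lambda>x. g z x)"
  using g_cont[OF continuous_on_const continuous_on_id] by auto

lemma epsd: fixes h :: "real \<Rightarrow> real" assumes "continuous_on I h" "z0\<in>I" "e > 0"
  obtains d where "d > 0" "\<And>z. z\<in>I \<Longrightarrow> \<bar>z - z0\<bar> < d \<Longrightarrow> \<bar>h z - h z0\<bar> < e"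
proof -
  have "\<forall>x\<in>I. \<forall>e>0. \<exists>d>0. \<forall>x'\<in>I. \<bar>x' - x\<bar> < d \<longrightarrow> \<bar>h x' - h x\<bar> < e"
    using assms(1) unfolding Elementary_Metric_Spaces.continuous_on_iff dist_real_def .
  then obtain d where "d > 0" "\<forall>z\<in>I. \<bar>z - z0\<bar> < d \<longrightarrow> \<bar>h z - h z0\<bar> < e" using assms by blast
  then show ?thesis using that by blast
qed

lemma psi_smono: assumes "x\<in>I" "y\<in>I" "x < y" shows "psi x < psi y"
proof (rule ccontr)
  assume "\<not> ?thesis"
  then have eq: "psi x = psi y" using psi_mono assms by force
  have loc: "eventually (\<lambda>z. psi z0 = psi z) (at z0 within I)" if z0: "z0\<in>I" for z0
  proof -
    define d where "d = g y z0 - g x z0"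
    have dpos: "d > 0" unfolding d_def using mo assms z0 by simp
    obtain d1 where d1: "d1 > 0" "\<And>z. z\<in>I \<Longrightarrow> \<bar>z - z0\<bar> < d1 \<Longrightarrow> \<bar>g x z - g x z0\<bar> < d"
      using epsd[OF cont2[OF assms(1)] z0 dpos] by blast
    obtain d2 where d2: "d2 > 0" "\<And>z. z\<in>I \<Longrightarrow> \<bar>z - z0\<bar> < d2 \<Longrightarrow> \<bar>g y z - g y z0\<bar> < d"
      using epsd[OF cont2[OF assms(2)] z0 dpos] by blast
    have "psi z0 = psi z" if z: "z\<in>I" "\<bar>z - z0\<bar> < min d1 d2" for z
    proof (cases "z0 \<le> z")
      case True
      have "g x z0 \<le> g x z" using True le2 assms z z0 by simp
      moreover have "g x z \<le> g y z0" using d1(2)[of z] z unfolding d_def by simp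
      ultimately have "psi (g x z0) \<le> psi (g x z)" "psi (g x z) \<le> psi (g y z0)"
        using psi_mono cl assms z z0 by auto
      then show ?thesis using psi_add assms z z0 eq by simp
    next
      case False
      have "g y z \<le> g y z0" using False le2 assms z z0 by simp
      moreover have "g x z0 \<le> g y z" using d2(2)[of z] z unfolding d_def by simp
      ultimately have "psi (g x z0) \<le> psi (g y z)" "psi (g y z) \<le> psi (g y z0)"
        using psi_mono cl assms z z0 by auto
      then show ?thesis using psi_add assms z z0 eq by simp
    qed
    then show ?thesis unfolding eventually_at dist_real_def using d1 d2
      by (intro exI[of _ "min d1 d2"]) auto
  qed
  have "psi u = psi (g u u)"
    by (rule connected_local_const[OF is_interval_connected[OF iv] uI cl[OF uI uI]]) (use loc in blast)
  then show False using psi_add[OF uI uI] psi_u by simp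
qed

lemma h_cont: "k\<ge>1 \<Longrightarrow> continuous_on I (\<lambda>z. g (pw z k) (pw u j))"
  using g_cont[OF pw_cont continuous_on_const] pw_I uI by auto

lemma psi_cont: "continuous_on I psi"
  unfolding continuous_on_iff dist_real_def
proof (intro ballI allI impI)
  fix z0 e :: real assume z0: "z0\<in>I" and e: "e > 0"
  obtain k :: nat where k: "real k > 2 / e" using reals_Archimedean2 by blast
  have k1: "k \<ge> 1" using k e
    by (metis divide_pos_pos le_less_linear less_one not_less_iff_gr_or_eq of_nat_0 order.strict_trans zero_less_numeral)
  have ke: "2 / real k < e" using k e k1 by (simp add: divide_less_eq mult.commute)
  obtain m where m: "Cr k m z0" "\<not> Cr k (m+1) z0"
      "real_of_int m / real k \<le> psi z0" "psi z0 \<le> real_of_int m / real k + 1 / real k"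
    using psi_approx[OF z0 k1] by blast
  obtain j where j: "j\<ge>1" "m - 1 + int j \<ge> 1" "m + 1 + int j \<ge> 1" using A_valid2 by blast
  define h where "h z = g (pw z k) (pw u j)" for z
  define Lo where "Lo = pw u (nat (m - 1 + int j))"
  define Hi where "Hi = pw u (nat (m + 1 + int j))"
  have "Lo < pw u (nat (m + int j))" unfolding Lo_def using j by (intro pwu_smono) auto
  also have "\<dots> \<le> h z0" using Cr_iff[OF z0, of j m k] m j unfolding A_def h_def by simp
  finally have lo: "Lo < h z0" .
  have hi: "h z0 < Hi" using Cr_iff[OF z0, of j "m+1" k] m j unfolding A_def h_def Hi_def by simp
  obtain d where d: "d > 0" "\<And>z. z\<in>I \<Longrightarrow> \<bar>z - z0\<bar> < d \<Longrightarrow> \<bar>h z - h z0\<bar> < min (h z0 - Lo) (Hi - h z0)"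
    using epsd[OF h_cont[OF k1, of j] z0, of "min (h z0 - Lo) (Hi - h z0)"] lo hi unfolding h_def by auto
  show "\<exists>d>0. \<forall>z\<in>I. \<bar>z - z0\<bar> < d \<longrightarrow> \<bar>psi z - psi z0\<bar> < e"
  proof (intro exI[of _ d] conjI ballI impI)
    show "d > 0" by fact
  next
    fix z assume z: "z\<in>I" "\<bar>z - z0\<bar> < d"
    have hz: "Lo < h z" "h z < Hi" using d(2)[OF z] by auto
    have "Cr k (m - 1) z" using Cr_iff[OF z(1) j(1,2), of k] hz unfolding A_def h_def Lo_def by simp
    then have p1: "real_of_int (m - 1) / real k \<le> psi z" using P1 z k1 by blast
    have "\<not> Cr k (m + 1) z" using Cr_iff[OF z(1) j(1,3), of k] hz unfolding A_def h_def Hi_def by simp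
    then have p2: "psi z \<le> real_of_int (m + 1) / real k" using P2 z k1 by blast
    have "real_of_int (m - 1) / real k = real_of_int m / real k - 2 * (1 / real k) + 1 / real k"
      by (simp add: diff_divide_distrib)
    moreover have "real_of_int (m + 1) / real k = real_of_int m / real k + 1 / real k"
      by (simp add: add_divide_distrib)
    moreover have "2 * (1 / real k) = 2 / real k" by simp
    ultimately show "\<bar>psi z - psi z0\<bar> < e" using p1 p2 m(3,4) ke unfolding abs_less_iff
      by (smt (verit))
  qed
qed

lemma aczel_result: "continuous_on I psi \<and> strict_mono_on I psi \<and> (\<forall>x\<in>I. \<forall>y\<in>I. psi (g x y) = psi x + psi y)"
  using psi_cont psi_smono psi_add unfolding strict_mono_on_def by blast

end

lemma sign_const:
  fixes F :: "'a::topological_space \<Rightarrow> real"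
  assumes "connected S" "continuous_on S F" "\<And>s. s\<in>S \<Longrightarrow> F s \<noteq> 0" "s0 \<in> S" "F s0 > 0" "s \<in> S"
  shows "F s > 0"
proof (rule ccontr)
  assume "\<not> F s > 0"
  then have "F s < 0" using assms(3)[OF assms(6)] by simp
  moreover have "connected (F ` S)" using connected_continuous_image assms by blast
  moreover have "F s \<in> F ` S" "F s0 \<in> F ` S" using assms(4,6) by auto
  ultimately have "0 \<in> F ` S" using assms(5) unfolding connected_iff_interval
    by (meson less_imp_le)
  then show False using assms(3) by auto
qed

lemma mem_neg: "(x::real) \<in> uminus ` I \<longleftrightarrow> -x \<in> I"
  by (force)

lemma aczel_mono:
  fixes I :: "real set" and g :: "real \<Rightarrow> real \<Rightarrow> real"
  assumes iv: "is_interval I" and nt: "\<exists>x\<in>I. \<exists>y\<in>I. x < y"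
    and cl: "\<And>x y. x\<in>I \<Longrightarrow> y\<in>I \<Longrightarrow> g x y \<in> I"
    and cm: "\<And>x y. x\<in>I \<Longrightarrow> y\<in>I \<Longrightarrow> g x y = g y x"
    and as: "\<And>x y z. x\<in>I \<Longrightarrow> y\<in>I \<Longrightarrow> z\<in>I \<Longrightarrow> g (g x y) z = g x (g y z)"
    and canc: "\<And>x y z. x\<in>I \<Longrightarrow> y\<in>I \<Longrightarrow> z\<in>I \<Longrightarrow> g x z = g y z \<Longrightarrow> x = y"
    and ct: "continuous_on (I\<times>I) (\<lambda>p. g (fst p) (snd p))"
  shows "\<forall>x\<in>I. \<forall>y\<in>I. \<forall>z\<in>I. x < y \<longrightarrow> g x z < g y z"
proof -
  define T where "T = {p::real\<times>real\<times>real. fst p \<in> I \<and> fst (snd p) \<in> I \<and> snd (snd p) \<in> I \<and> fst p < fst (snd p)}"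
  define F where "F p = g (fst (snd p)) (snd (snd p)) - g (fst p) (snd (snd p))" for p :: "real\<times>real\<times>real"
  have cvI: "convex I" using iv is_interval_convex by blast
  have "convex T"
  proof (rule convexI)
    fix x y :: "real\<times>real\<times>real" and a b :: real
    assume x: "x\<in>T" and y: "y\<in>T" and ab0: "0 \<le> a" "0 \<le> b" "a + b = 1"
    then have ab: "0 \<le> a \<and> 0 \<le> b \<and> a + b = 1" by simp
    obtain x1 x2 x3 where xx: "x = (x1,x2,x3)" by (cases x) auto
    obtain y1 y2 y3 where yy: "y = (y1,y2,y3)" by (cases y) auto
    have "a*x1 + b*y1 \<in> I" "a*x2 + b*y2 \<in> I" "a*x3 + b*y3 \<in> I"
      using x y ab0 convexD[OF cvI] unfolding T_def xx yy by auto
    moreover have "a*x1 + b*y1 < a*x2 + b*y2"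
    proof (cases "a = 0")
      case True then show ?thesis using ab y unfolding T_def yy by simp
    next
      case False
      then have "a*x1 < a*x2" using ab x unfolding T_def xx by simp
      moreover have "b*y1 \<le> b*y2" using ab y unfolding T_def yy by (simp add: mult_left_mono)
      ultimately show ?thesis by simp
    qed
    ultimately show "a *\<^sub>R x + b *\<^sub>R y \<in> T" unfolding T_def xx yy by simp
  qed
  then have conT: "connected T" by (rule convex_connected)
  have cF: "continuous_on T F" unfolding F_def
  proof (intro continuous_on_diff)
    show "continuous_on T (\<lambda>p. g (fst (snd p)) (snd (snd p)))"
      by (rule continuous_on_compose2[OF ct, of T "\<lambda>p. (fst (snd p), snd (snd p))", simplified])
         (auto intro!: continuous_intros simp: T_def)
    show "continuous_on T (\<lambda>p. g (fst p) (snd (snd p)))"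
      by (rule continuous_on_compose2[OF ct, of T "\<lambda>p. (fst p, snd (snd p))", simplified])
         (auto intro!: continuous_intros simp: T_def)
  qed
  have nz: "F p \<noteq> 0" if "p\<in>T" for p
  proof
    assume "F p = 0"
    then have "g (fst (snd p)) (snd (snd p)) = g (fst p) (snd (snd p))" unfolding F_def by simp
    then have "fst (snd p) = fst p" using canc that unfolding T_def by blast
    then show False using that unfolding T_def by simp
  qed
  obtain a b where ab: "a\<in>I" "b\<in>I" "a < b" using nt by blast
  have allpos: "\<forall>p\<in>T. F p > 0"
  proof (cases "F (a,b,a) > 0")
    case True then show ?thesis using sign_const[OF conT cF nz, of "(a,b,a)"] ab unfolding T_def by auto
  next
    case False
    then have neg0: "F (a,b,a) < 0" using nz[of "(a,b,a)"] ab unfolding T_def by force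
    have allneg: "F p < 0" if "p \<in> T" for p
      using sign_const[OF conT continuous_on_minus[OF cF], of "(a,b,a)"] nz ab that neg0 unfolding T_def by auto
    have dec: "g y z < g x z" if "x\<in>I" "y\<in>I" "z\<in>I" "x<y" for x y z
      using allneg[of "(x,y,z)"] that unfolding T_def F_def by simp
    have dec2: "g z y < g z x" if "x\<in>I" "y\<in>I" "z\<in>I" "x<y" for x y z
      using dec[OF that] cm that by simp
    define c where "c = g a a"
    have cI: "c \<in> I" unfolding c_def using cl ab by simp
    have e1: "g c a < g c b \<Longrightarrow> False" using dec2[OF ab(1,2) cI ab(3)] by simp
    have "g a b < g a a" using dec2[OF ab(1,2,1) ab(3)] .
    then have "g a (g a a) < g a (g a b)" using dec2 cl ab by simp
    moreover have "g c a = g a (g a a)" "g c b = g a (g a b)" unfolding c_def using as ab by auto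
    ultimately show ?thesis using e1 by simp
  qed
  show ?thesis using allpos unfolding T_def F_def by force
qed

lemma aczel:
  fixes I :: "real set" and g :: "real \<Rightarrow> real \<Rightarrow> real"
  assumes iv: "is_interval I" and nt: "\<exists>x\<in>I. \<exists>y\<in>I. x < y"
    and cl: "\<And>x y. x\<in>I \<Longrightarrow> y\<in>I \<Longrightarrow> g x y \<in> I"
    and cm: "\<And>x y. x\<in>I \<Longrightarrow> y\<in>I \<Longrightarrow> g x y = g y x"
    and as: "\<And>x y z. x\<in>I \<Longrightarrow> y\<in>I \<Longrightarrow> z\<in>I \<Longrightarrow> g (g x y) z = g x (g y z)"
    and canc: "\<And>x y z. x\<in>I \<Longrightarrow> y\<in>I \<Longrightarrow> z\<in>I \<Longrightarrow> g x z = g y z \<Longrightarrow> x = y"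
    and ct: "continuous_on (I\<times>I) (\<lambda>p. g (fst p) (snd p))"
  shows "\<exists>psi::real\<Rightarrow>real. continuous_on I psi \<and> strict_mono_on I psi \<and> (\<forall>x\<in>I. \<forall>y\<in>I. psi (g x y) = psi x + psi y)"
proof -
  have mo: "\<And>x y z. x\<in>I \<Longrightarrow> y\<in>I \<Longrightarrow> z\<in>I \<Longrightarrow> x < y \<Longrightarrow> g x z < g y z"
  proof -
    have "\<forall>x\<in>I. \<forall>y\<in>I. \<forall>z\<in>I. x < y \<longrightarrow> g x z < g y z"
      by (rule aczel_mono[of I g, OF iv nt cl cm as canc ct])
    then show "\<And>x y z. x\<in>I \<Longrightarrow> y\<in>I \<Longrightarrow> z\<in>I \<Longrightarrow> x < y \<Longrightarrow> g x z < g y z" by blast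
  qed
  have canc2: "y = z" if "x\<in>I" "y\<in>I" "z\<in>I" "g x y = g x z" for x y z
    using canc[of y z x] cm that by simp
  have neutral: "g a w = w" if "a\<in>I" "w\<in>I" "g a a = a" for a w
    using canc2[of a "g a w" w] as[of a a w] that cl by simp
  obtain a b where ab: "a\<in>I" "b\<in>I" "a < b" using nt by blast
  obtain u where u: "u\<in>I" "g u u \<noteq> u"
  proof (cases "g a a = a")
    case True
    show ?thesis
    proof (cases "g b b = b")
      case True2: True
      have "g a b = b" using neutral[OF ab(1,2) True] .
      moreover have "g b a = a" using neutral[OF ab(2,1) True2] .
      ultimately show ?thesis using cm[OF ab(1,2)] ab by simp
    next
      case False then show ?thesis using that ab by blast
    qed
  next
    case False then show ?thesis using that ab by blast
  qed
  have nofix: "g z u \<noteq> z" if "z\<in>I" for z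
  proof
    assume "g z u = z"
    then have "g z (g u u) = g z u" using as[of z u u] that u by simp
    then have "g u u = u" using canc2[of z "g u u" u] that u cl by simp
    then show False using u by simp
  qed
  have conI: "connected I" using is_interval_connected[OF iv] .
  have cF: "continuous_on I (\<lambda>z. g z u - z)"
    by (intro continuous_on_diff continuous_on_id)
       (rule continuous_on_compose2[OF ct, of I "\<lambda>z. (z, u)", simplified], auto intro!: continuous_intros simp: u)
  show ?thesis
  proof (cases "g u u > u")
    case True
    have up: "z < g z u" if "z\<in>I" for z
      using sign_const[OF conI cF, of u z] nofix True u that by auto
    have "possg I g u" using iv cl cm as mo ct u up by unfold_locales auto
    from possg.aczel_result[OF this] show ?thesis by blast
  next
    case False
    then have lt: "g u u < u" using u by simp
    have dn: "g z u < z" if "z\<in>I" for z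
    proof -
      have nf2: "\<And>s. s\<in>I \<Longrightarrow> s \<noteq> g s u" using nofix by metis
      show ?thesis using sign_const[OF conI continuous_on_minus[OF cF], of u z] nf2 lt u that by auto
    qed
    define I' where "I' = uminus ` I"
    define g' where "g' x y = - g (-x) (-y)" for x y
    have mI: "x \<in> I' \<longleftrightarrow> -x \<in> I" for x unfolding I'_def by (rule mem_neg)
    have ct': "continuous_on (I'\<times>I') (\<lambda>p. g' (fst p) (snd p))"
      unfolding g'_def
      by (intro continuous_on_minus, rule continuous_on_compose2[OF ct, of _ "\<lambda>p. (- fst p, - snd p)", simplified])
         (auto intro!: continuous_intros simp: mI)
    have iv': "is_interval I'" unfolding is_interval_1 mI
    proof (intro ballI allI impI)
      fix a b x assume "a \<in> I'" "b \<in> I'" "a \<le> x \<and> x \<le> b"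
      then show "- x \<in> I" using iv unfolding is_interval_1 mI by (meson neg_le_iff_le)
    qed
    interpret possg I' g' "-u"
    proof (unfold_locales)
      show "is_interval I'" by (rule iv')
      show "\<And>x y. x \<in> I' \<Longrightarrow> y \<in> I' \<Longrightarrow> g' x y \<in> I'" unfolding g'_def mI using cl by simp
      show "\<And>x y. x \<in> I' \<Longrightarrow> y \<in> I' \<Longrightarrow> g' x y = g' y x" unfolding g'_def mI using cm by simp
      show "\<And>x y z. x \<in> I' \<Longrightarrow> y \<in> I' \<Longrightarrow> z \<in> I' \<Longrightarrow> g' (g' x y) z = g' x (g' y z)"
        unfolding g'_def mI using as cl by simp
      show "\<And>x y z. x \<in> I' \<Longrightarrow> y \<in> I' \<Longrightarrow> z \<in> I' \<Longrightarrow> x < y \<Longrightarrow> g' x z < g' y z"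
        unfolding g'_def mI using mo by simp
      show "continuous_on (I' \<times> I') (\<lambda>p. g' (fst p) (snd p))" by (rule ct')
      show "- u \<in> I'" unfolding mI using u by simp
      show "\<And>z. z \<in> I' \<Longrightarrow> z < g' z (- u)" unfolding g'_def mI using dn by force
    qed
    have r: "continuous_on I' psi \<and> strict_mono_on I' psi \<and> (\<forall>x\<in>I'. \<forall>y\<in>I'. psi (g' x y) = psi x + psi y)"
      by (rule aczel_result)
    define ph where "ph x = - psi (- x)" for x
    have "continuous_on I ph" unfolding ph_def
      by (intro continuous_on_minus, rule continuous_on_compose2[of I' psi I uminus])
         (use r in \<open>auto intro!: continuous_intros simp: mI\<close>)
    moreover have "strict_mono_on I ph" unfolding strict_mono_on_def ph_def
      using r unfolding strict_mono_on_def mI by force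
    moreover have "\<forall>x\<in>I. \<forall>y\<in>I. ph (g x y) = ph x + ph y"
    proof (intro ballI)
      fix x y assume "x\<in>I" "y\<in>I"
      then have "psi (g' (-x) (-y)) = psi (-x) + psi (-y)" using r mI by simp
      then show "ph (g x y) = ph x + ph y" unfolding ph_def g'_def by simp
    qed
    ultimately show ?thesis by blast
  qed
qed


lemma sumlist_nth: "sum_list (map h xs) = (\<Sum>i<length xs. h (xs ! i))"
  by (simp add: sum_list_sum_nth atLeast0LessThan)

lemma adm_add: "admissible_J J \<Longrightarrow> p \<in> J \<Longrightarrow> q \<in> J \<Longrightarrow> p + q \<in> J"
  unfolding admissible_J_def by auto

lemma adm_sum: assumes "admissible_J J" "ys \<noteq> []" "set ys \<subseteq> J" shows "sum_list ys \<in> J"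
  using assms(2,3)
proof (induction ys)
  case Nil then show ?case by simp
next
  case (Cons y ys)
  then show ?case using adm_add[OF assms(1)] by (cases "ys = []") auto
qed

lemma tuples_iff: "xs \<in> tuples I n \<longleftrightarrow> length xs = n \<and> (\<forall>i<n. xs ! i \<in> I)"
  unfolding tuples_def by (auto simp: set_conv_nth)

lemma rep_val:
  assumes rep: "represents I n f \<phi> J" and n: "n \<ge> 1" and xs: "xs \<in> tuples I n"
  shows "sum_list (map \<phi> xs) \<in> J" "f xs \<in> I" "\<phi> (f xs) = sum_list (map \<phi> xs)"
proof -
  have adm: "admissible_J J" and bij: "bij_betw \<phi> I J" and fx: "f xs = inv_into I \<phi> (sum_list (map \<phi> xs))"
    using rep xs unfolding represents_def by auto
  have "set (map \<phi> xs) \<subseteq> J" using xs bij unfolding tuples_def bij_betw_def by auto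
  moreover have "map \<phi> xs \<noteq> []" using xs n unfolding tuples_def by auto
  ultimately show sJ: "sum_list (map \<phi> xs) \<in> J" using adm_sum[OF adm] by blast
  then show "f xs \<in> I" unfolding fx using bij by (metis bij_betw_def inv_into_into)
  show "\<phi> (f xs) = sum_list (map \<phi> xs)" unfolding fx using bij sJ by (metis bij_betw_def f_inv_into_f)
qed

lemma rep_neg:
  assumes "represents I n f \<phi> J"
  shows "represents I n f (\<lambda>x. - \<phi> x) (uminus ` J)"
proof -
  have adm: "admissible_J J" using assms unfolding represents_def by simp
  have "admissible_J (uminus ` J)"
    using adm unfolding admissible_J_def
    by (elim disjE exE conjE) (auto simp: image_uminus_lessThan image_uminus_atMost
        image_uminus_greaterThan image_uminus_atLeast intro: exI[of _ "- _"])
  moreover have "continuous_on I (\<lambda>x. - \<phi> x)" using assms unfolding represents_def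
    by (intro continuous_on_minus) simp
  moreover have "bij_betw (\<lambda>x. - \<phi> x) I (uminus ` J)"
  proof -
    have b1: "bij_betw \<phi> I J" using assms unfolding represents_def by simp
    have b2: "bij_betw uminus J (uminus ` J)" by (rule bij_betw_imageI) (auto simp: inj_on_def)
    show ?thesis using bij_betw_trans[OF b1 b2] by (simp add: comp_def)
  qed
  moreover have "\<forall>xs\<in>tuples I n. f xs = inv_into I (\<lambda>x. - \<phi> x) (sum_list (map (\<lambda>x. - \<phi> x) xs))"
  proof
    fix xs assume "xs \<in> tuples I n"
    then have "f xs = inv_into I \<phi> (sum_list (map \<phi> xs))" using assms unfolding represents_def by simp
    moreover have "sum_list (map (\<lambda>x. - \<phi> x) xs) = - sum_list (map \<phi> xs)"
      by (induction xs) auto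
    ultimately show "f xs = inv_into I (\<lambda>x. - \<phi> x) (sum_list (map (\<lambda>x. - \<phi> x) xs))"
      by (simp add: inv_into_def)
  qed
  ultimately show ?thesis unfolding represents_def by simp
qed

lemma sum_cont:
  fixes \<phi> :: "real \<Rightarrow> real"
  assumes cont: "continuous_on I \<phi>"
  shows "set xs \<subseteq> I \<Longrightarrow> e > 0 \<Longrightarrow> \<exists>d>0. \<forall>ys. length ys = length xs \<and> set ys \<subseteq> I \<and>
     (\<forall>i<length xs. \<bar>ys!i - xs!i\<bar> < d) \<longrightarrow> \<bar>sum_list (map \<phi> ys) - sum_list (map \<phi> xs)\<bar> < e"
proof (induction xs arbitrary: e)
  case Nil then show ?case by (intro exI[of _ 1]) auto
next
  case (Cons x xs)
  have he: "e/2 > 0" using Cons by simp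
  obtain d1 where d1: "d1 > 0" "\<forall>y\<in>I. \<bar>y - x\<bar> < d1 \<longrightarrow> \<bar>\<phi> y - \<phi> x\<bar> < e/2"
    using cont Cons(2) he unfolding continuous_on_iff dist_real_def by (metis list.set_intros(1) subsetD)
  obtain d2 where d2: "d2 > 0" "\<forall>ys. length ys = length xs \<and> set ys \<subseteq> I \<and>
     (\<forall>i<length xs. \<bar>ys!i - xs!i\<bar> < d2) \<longrightarrow> \<bar>sum_list (map \<phi> ys) - sum_list (map \<phi> xs)\<bar> < e/2"
    using Cons.IH[OF _ he] Cons(2) by auto
  show ?case
  proof (intro exI[of _ "min d1 d2"] conjI allI impI)
    show "min d1 d2 > 0" using d1 d2 by simp
  next
    fix ys assume H: "length ys = length (x # xs) \<and> set ys \<subseteq> I \<and>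
      (\<forall>i<length (x # xs). \<bar>ys ! i - (x # xs) ! i\<bar> < min d1 d2)"
    then obtain y ys' where ys: "ys = y # ys'" by (cases ys) auto
    have a: "\<bar>\<phi> y - \<phi> x\<bar> < e/2" using d1 H[unfolded ys] by (auto dest: spec[of _ 0])
    have "\<forall>i<length xs. \<bar>ys' ! i - xs ! i\<bar> < d2"
    proof (intro allI impI)
      fix i assume "i < length xs"
      then show "\<bar>ys' ! i - xs ! i\<bar> < d2" using H[unfolded ys] by (auto dest!: spec[of _ "Suc i"])
    qed
    then have b: "\<bar>sum_list (map \<phi> ys') - sum_list (map \<phi> xs)\<bar> < e/2" using d2 H[unfolded ys] by auto
    show "\<bar>sum_list (map \<phi> ys) - sum_list (map \<phi> (x # xs))\<bar> < e" using a b unfolding ys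
      by (simp add: abs_less_iff; linarith)
  qed
qed

lemma rev_props:
  assumes iv: "is_interval I" and n: "n \<ge> 1" and rep: "represents I n f \<phi> J" and sm: "strict_mono_on I \<phi>"
  shows "continuous_nary I n f \<and> symmetric_nary I n f \<and> cancellative_nary I n f \<and> associative_nary I n f"
proof -
  note rv = rep_val[OF rep n]
  have inj: "inj_on \<phi> I" using rep unfolding represents_def bij_betw_def by simp
  have fform: "f xs = inv_into I \<phi> (sum_list (map \<phi> xs))" if "xs \<in> tuples I n" for xs
    using rep that unfolding represents_def by simp
  have le_iff: "\<phi> a \<le> \<phi> b \<longleftrightarrow> a \<le> b" if "a\<in>I" "b\<in>I" for a b
  proof
    assume h: "\<phi> a \<le> \<phi> b"
    show "a \<le> b"
    proof (rule ccontr)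
      assume "\<not> a \<le> b"
      then have "\<phi> b < \<phi> a" using sm that unfolding strict_mono_on_def by force
      then show False using h by simp
    qed
  next
    assume "a \<le> b"
    then show "\<phi> a \<le> \<phi> b" using sm that unfolding strict_mono_on_def
      by (cases "a = b") (auto intro: less_imp_le)
  qed
  have lt_iff: "\<phi> a < \<phi> b \<longleftrightarrow> a < b" if "a\<in>I" "b\<in>I" for a b
    using le_iff that by (meson linorder_not_le)
  have sym: "symmetric_nary I n f" unfolding symmetric_nary_def
  proof (intro ballI allI impI)
    fix xs \<sigma> assume xs: "xs \<in> tuples I n" and p: "\<sigma> permutes {..<n}"
    define ys where "ys = map (\<lambda>i. xs ! \<sigma> i) [0..<n]"
    have ys: "ys \<in> tuples I n" unfolding ys_def tuples_iff using xs p unfolding tuples_iff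
      by (auto, metis lessThan_iff permutes_in_image)
    have "sum_list (map \<phi> ys) = (\<Sum>i<n. \<phi> (xs ! \<sigma> i))" unfolding ys_def sumlist_nth by simp
    also have "\<dots> = (\<Sum>i<n. \<phi> (xs ! i))" using sum.permute[OF p, of "\<lambda>i. \<phi> (xs ! i)"] by (simp add: comp_def)
    also have "\<dots> = sum_list (map \<phi> xs)" unfolding sumlist_nth using xs unfolding tuples_iff by simp
    finally show "f (map (\<lambda>i. xs ! \<sigma> i) [0..<n]) = f xs"
      using fform[OF ys] fform[OF xs] unfolding ys_def by simp
  qed
  have canc: "cancellative_nary I n f" unfolding cancellative_nary_def
  proof (intro allI impI ballI)
    fix k xs ys assume k: "k < n" and xs: "xs \<in> tuples I n" and ys: "ys \<in> tuples I n"
      and H: "(\<forall>i<n. i \<noteq> k \<longrightarrow> xs ! i = ys ! i) \<and> f xs = f ys"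
    have lx: "length xs = n" "length ys = n" using xs ys unfolding tuples_iff by auto
    have "sum_list (map \<phi> xs) = sum_list (map \<phi> ys)" using rv(3)[OF xs] rv(3)[OF ys] H by simp
    then have "(\<Sum>i<n. \<phi> (xs ! i)) = (\<Sum>i<n. \<phi> (ys ! i))" unfolding sumlist_nth lx .
    moreover have "(\<Sum>i<n. \<phi> (xs ! i)) = \<phi> (xs ! k) + (\<Sum>i\<in>{..<n}-{k}. \<phi> (xs ! i))"
      using k by (simp add: sum.remove)
    moreover have "(\<Sum>i<n. \<phi> (ys ! i)) = \<phi> (ys ! k) + (\<Sum>i\<in>{..<n}-{k}. \<phi> (ys ! i))"
      using k by (simp add: sum.remove)
    moreover have "(\<Sum>i\<in>{..<n}-{k}. \<phi> (xs ! i)) = (\<Sum>i\<in>{..<n}-{k}. \<phi> (ys ! i))"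
      using H by (intro sum.cong) auto
    ultimately have "\<phi> (xs ! k) = \<phi> (ys ! k)" by simp
    then show "xs ! k = ys ! k" using inj k xs ys unfolding tuples_iff inj_on_def by blast
  qed
  have assoc: "associative_nary I n f" unfolding associative_nary_def
  proof (intro allI impI ballI)
    fix i xs assume i: "i < n - 1" and xs: "xs \<in> tuples I (2 * n - 1)"
    have lx: "length xs = 2 * n - 1" using xs unfolding tuples_def by simp
    have setx: "set xs \<subseteq> I" using xs unfolding tuples_def by simp
    have gen: "f (take j xs @ [f (take n (drop j xs))] @ drop (j + n) xs) = inv_into I \<phi> (sum_list (map \<phi> xs))"
      if j: "j \<le> n - 1" for j
    proof -
      have t1: "take n (drop j xs) \<in> tuples I n" unfolding tuples_def using lx j setx
        by (auto dest: in_set_takeD in_set_dropD)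
      define L where "L = take j xs @ [f (take n (drop j xs))] @ drop (j + n) xs"
      have L: "L \<in> tuples I n" unfolding L_def tuples_def using lx j setx rv(2)[OF t1] n
        by (auto dest: in_set_takeD in_set_dropD)
      have "sum_list (map \<phi> L) = sum_list (map \<phi> (take j xs)) + sum_list (map \<phi> (take n (drop j xs)))
          + sum_list (map \<phi> (drop (j + n) xs))" unfolding L_def using rv(3)[OF t1] by simp
      also have "\<dots> = sum_list (map \<phi> (take j xs @ take n (drop j xs) @ drop (j + n) xs))" by simp
      also have "take j xs @ take n (drop j xs) @ drop (j + n) xs = xs"
        by (metis append.assoc append_take_drop_id take_add drop_drop add.commute)
      finally show ?thesis using fform[OF L] unfolding L_def by simp
    qed
    show "f (take i xs @ [f (take n (drop i xs))] @ drop (i + n) xs) =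
          f (take (Suc i) xs @ [f (take n (drop (Suc i) xs))] @ drop (Suc i + n) xs)"
      using gen[of i] gen[of "Suc i"] i by simp
  qed
  have cont: "continuous_nary I n f" unfolding continuous_nary_def
  proof (intro ballI allI impI)
    fix xs e assume xs: "xs \<in> tuples I n" and e: "(0::real) < e"
    have lx: "length xs = n" and setx: "set xs \<subseteq> I" using xs unfolding tuples_def by auto
    define y0 where "y0 = f xs"
    have y0I: "y0 \<in> I" using rv(2)[OF xs] unfolding y0_def .
    have s0: "\<phi> y0 = sum_list (map \<phi> xs)" using rv(3)[OF xs] unfolding y0_def .
    have cphi: "continuous_on I \<phi>" using rep unfolding represents_def by simp
    have Sc: "\<exists>d>0. \<forall>ys\<in>tuples I n. (\<forall>i<n. \<bar>ys!i - xs!i\<bar> < d) \<longrightarrow>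
        \<bar>sum_list (map \<phi> ys) - sum_list (map \<phi> xs)\<bar> < e'" if e'pos: "e' > 0" for e'
    proof -
      obtain d where "d > 0" "\<forall>ys. length ys = length xs \<and> set ys \<subseteq> I \<and>
       (\<forall>i<length xs. \<bar>ys!i - xs!i\<bar> < d) \<longrightarrow> \<bar>sum_list (map \<phi> ys) - sum_list (map \<phi> xs)\<bar> < e'"
        using sum_cont[OF cphi setx e'pos] by blast
      then show ?thesis using lx unfolding tuples_def by (intro exI[of _ d]) auto
    qed
    have lo: "\<exists>d>0. \<forall>ys\<in>tuples I n. (\<forall>i<n. \<bar>ys!i - xs!i\<bar> < d) \<longrightarrow> y0 - e < f ys"
    proof (cases "y0 - e/2 \<in> I")
      case True
      have "\<phi> (y0 - e/2) < \<phi> y0" using lt_iff True y0I e by simp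
      then have pos: "\<phi> y0 - \<phi> (y0 - e/2) > 0" by simp
      obtain d where d: "d > 0" "\<forall>ys\<in>tuples I n. (\<forall>i<n. \<bar>ys!i - xs!i\<bar> < d) \<longrightarrow>
        \<bar>sum_list (map \<phi> ys) - sum_list (map \<phi> xs)\<bar> < \<phi> y0 - \<phi> (y0 - e/2)" using Sc[OF pos] by blast
      show ?thesis
      proof (intro exI[of _ d] conjI ballI impI)
        show "d > 0" by fact
      next
        fix ys assume ys: "ys \<in> tuples I n" "\<forall>i<n. \<bar>ys!i - xs!i\<bar> < d"
        then have "\<bar>\<phi> (f ys) - \<phi> y0\<bar> < \<phi> y0 - \<phi> (y0 - e/2)" using d(2) rv(3)[OF ys(1)] s0 by simp
        then have "\<phi> (y0 - e/2) < \<phi> (f ys)" by (simp add: abs_less_iff)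
        then have "y0 - e/2 < f ys" using lt_iff True rv(2)[OF ys(1)] by simp
        then show "y0 - e < f ys" using e by simp
      qed
    next
      case False
      show ?thesis
      proof (intro exI[of _ 1] conjI ballI impI)
        fix ys assume ys: "ys \<in> tuples I n"
        show "y0 - e < f ys"
        proof (rule ccontr)
          assume "\<not> ?thesis"
          then have "f ys \<le> y0 - e/2" "y0 - e/2 \<le> y0" using e by auto
          then show False using iv rv(2)[OF ys] y0I False unfolding is_interval_1 by blast
        qed
      qed simp
    qed
    have hi: "\<exists>d>0. \<forall>ys\<in>tuples I n. (\<forall>i<n. \<bar>ys!i - xs!i\<bar> < d) \<longrightarrow> f ys < y0 + e"
    proof (cases "y0 + e/2 \<in> I")
      case True
      have "\<phi> y0 < \<phi> (y0 + e/2)" using lt_iff True y0I e by simp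
      then have pos: "\<phi> (y0 + e/2) - \<phi> y0 > 0" by simp
      obtain d where d: "d > 0" "\<forall>ys\<in>tuples I n. (\<forall>i<n. \<bar>ys!i - xs!i\<bar> < d) \<longrightarrow>
        \<bar>sum_list (map \<phi> ys) - sum_list (map \<phi> xs)\<bar> < \<phi> (y0 + e/2) - \<phi> y0" using Sc[OF pos] by blast
      show ?thesis
      proof (intro exI[of _ d] conjI ballI impI)
        show "d > 0" by fact
      next
        fix ys assume ys: "ys \<in> tuples I n" "\<forall>i<n. \<bar>ys!i - xs!i\<bar> < d"
        then have "\<bar>\<phi> (f ys) - \<phi> y0\<bar> < \<phi> (y0 + e/2) - \<phi> y0" using d(2) rv(3)[OF ys(1)] s0 by simp
        then have "\<phi> (f ys) < \<phi> (y0 + e/2)" by (simp add: abs_less_iff)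
        then have "f ys < y0 + e/2" using lt_iff True rv(2)[OF ys(1)] by simp
        then show "f ys < y0 + e" using e by simp
      qed
    next
      case False
      show ?thesis
      proof (intro exI[of _ 1] conjI ballI impI)
        fix ys assume ys: "ys \<in> tuples I n"
        show "f ys < y0 + e"
        proof (rule ccontr)
          assume "\<not> ?thesis"
          then have "y0 + e/2 \<le> f ys" "y0 \<le> y0 + e/2" using e by auto
          then show False using iv rv(2)[OF ys] y0I False unfolding is_interval_1 by blast
        qed
      qed simp
    qed
    obtain d1 where d1: "d1 > 0" "\<forall>ys\<in>tuples I n. (\<forall>i<n. \<bar>ys!i - xs!i\<bar> < d1) \<longrightarrow> y0 - e < f ys"
      using lo by blast
    obtain d2 where d2: "d2 > 0" "\<forall>ys\<in>tuples I n. (\<forall>i<n. \<bar>ys!i - xs!i\<bar> < d2) \<longrightarrow> f ys < y0 + e"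
      using hi by blast
    show "\<exists>d>0. \<forall>ys\<in>tuples I n. (\<forall>i<n. \<bar>ys ! i - xs ! i\<bar> < d) \<longrightarrow> \<bar>f ys - f xs\<bar> < e"
    proof (intro exI[of _ "min d1 d2"] conjI ballI impI)
      show "min d1 d2 > 0" using d1 d2 by simp
    next
      fix ys assume "ys \<in> tuples I n" "\<forall>i<n. \<bar>ys ! i - xs ! i\<bar> < min d1 d2"
      then show "\<bar>f ys - f xs\<bar> < e" using d1 d2 unfolding y0_def by force
    qed
  qed
  show ?thesis using cont sym canc assoc by blast
qed


lemma sum_list_upd: "k < length xs \<Longrightarrow> sum_list (map h (xs[k:=v])) + h (xs!k) = sum_list (map h xs) + (h v :: real)"
proof (induction xs arbitrary: k)
  case Nil then show ?case by simp
next
  case (Cons x xs) then show ?case by (cases k) auto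
qed

lemma sum_list_addc: "sum_list (map (\<lambda>x. h x + c) xs) = sum_list (map h xs) + real (length xs) * (c::real)"
  by (induction xs) (auto simp: algebra_simps)

lemma sum_list_rep: "sum_list (map h (replicate m x)) = real m * (h x :: real)"
  by (induction m) (auto simp: algebra_simps)

lemma adm_from:
  fixes J :: "real set"
  assumes iv: "is_interval J" and nt: "\<exists>p\<in>J. \<exists>q\<in>J. p < q" and cl: "\<And>p. p \<in> J \<Longrightarrow> real n * p \<in> J"
    and n2: "n \<ge> 2"
  shows "admissible_J J"
proof -
  have n1: "real n > 1" using n2 by simp
  have ivl: "t \<in> J" if "x \<in> J" "y \<in> J" "x \<le> t" "t \<le> y" for x y t
    using iv that unfolding is_interval_1 by blast
  have pw: "real n ^ k * p \<in> J" if "p \<in> J" for p k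
  proof (induction k)
    case 0 then show ?case using that by simp
  next
    case (Suc k)
    then show ?case using cl[OF Suc] by (simp add: mult.assoc)
  qed
  have up: "t \<in> J" if p: "p \<in> J" "p > 0" and t: "t \<ge> p" for p t
  proof -
    obtain k where k: "t / p < real n ^ k" using real_arch_pow[OF n1] by blast
    then have "t < real n ^ k * p" using p by (simp add: divide_less_eq)
    then show ?thesis using ivl[OF p(1) pw[OF p(1), of k] t] by simp
  qed
  have down: "t \<in> J" if q: "q \<in> J" "q < 0" and t: "t \<le> q" for q t
  proof -
    obtain k where k: "t / q < real n ^ k" using real_arch_pow[OF n1] by blast
    then have "real n ^ k * q < t" using q by (simp add: divide_less_eq mult.commute)
    then show ?thesis using ivl[OF pw[OF q(1), of k] q(1) _ t] by simp
  qed
  show ?thesis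
  proof (cases "\<exists>p\<in>J. p > 0")
    case True
    then obtain p where p: "p \<in> J" "p > 0" by blast
    show ?thesis
    proof (cases "\<exists>q\<in>J. q < 0")
      case True
      then obtain q where q: "q \<in> J" "q < 0" by blast
      have "J = UNIV"
      proof (intro set_eqI iffI)
        fix t :: real
        show "t \<in> J"
        proof (cases "t \<ge> p")
          case True then show ?thesis using up p by blast
        next
          case False
          show ?thesis
          proof (cases "t \<le> q")
            case True then show ?thesis using down q by blast
          next
            case False2: False
            then show ?thesis using ivl[OF q(1) p(1), of t] False by simp
          qed
        qed
      qed simp
      then show ?thesis unfolding admissible_J_def by simp
    next
      case False
      then have nn: "\<forall>x\<in>J. 0 \<le> x" by force
      define a where "a = Inf J"
      have ne: "J \<noteq> {}" using p by auto
      have bdd: "bdd_below J" using nn by (intro bdd_belowI[of _ 0]) auto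
      have a0: "a \<ge> 0" unfolding a_def using ne nn by (intro cInf_greatest) auto
      have inJ: "t \<in> J" if ta: "t > a" for t
      proof -
        obtain j where j: "j \<in> J" "j < t" using cInf_lessD[OF ne, of t] ta unfolding a_def by blast
        show ?thesis
        proof (cases "t \<ge> p")
          case True then show ?thesis using up p by blast
        next
          case False then show ?thesis using ivl[OF j(1) p(1), of t] j by simp
        qed
      qed
      have geA: "t \<ge> a" if "t \<in> J" for t unfolding a_def using cInf_lower[OF that bdd] .
      show ?thesis
      proof (cases "a \<in> J")
        case True
        then have "J = {a..}" using inJ geA by (auto simp: order_le_less)
        then show ?thesis unfolding admissible_J_def using a0 by blast
      next
        case False
        then have "J = {a<..}" using inJ geA by (auto simp: order_le_less)
        then show ?thesis unfolding admissible_J_def using a0 by blast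
      qed
    qed
  next
    case False
    then have np: "\<forall>x\<in>J. x \<le> 0" by force
    obtain p q where pq: "p \<in> J" "q \<in> J" "p < q" using nt by blast
    then have p0: "p < 0" using np by force
    define b where "b = Sup J"
    have ne: "J \<noteq> {}" using pq by auto
    have bdd: "bdd_above J" using np by (intro bdd_aboveI[of _ 0]) auto
    have b0: "b \<le> 0" unfolding b_def using ne np by (intro cSup_least) auto
    have inJ: "t \<in> J" if tb: "t < b" for t
    proof -
      obtain j where j: "j \<in> J" "t < j" using less_cSupD[OF ne, of t] tb unfolding b_def by blast
      show ?thesis
      proof (cases "t \<le> p")
        case True then show ?thesis using down pq(1) p0 by blast
      next
        case False then show ?thesis using ivl[OF pq(1) j(1), of t] j by simp
      qed
    qed
    have leB: "t \<le> b" if "t \<in> J" for t unfolding b_def using cSup_upper[OF that bdd] .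
    show ?thesis
    proof (cases "b \<in> J")
      case True
      then have "J = {..b}" using inJ leB by (auto simp: order_le_less)
      then show ?thesis unfolding admissible_J_def using b0 by blast
    next
      case False
      then have "J = {..<b}" using inJ leB by (auto simp: order_le_less)
      then show ?thesis unfolding admissible_J_def using b0 by blast
    qed
  qed
qed

locale nsg =
  fixes I :: "real set" and n :: nat and f :: "real list \<Rightarrow> real" and a :: real
  assumes iv: "is_interval I" and nt: "\<exists>x\<in>I. \<exists>y\<in>I. x < y" and n2: "n \<ge> 2"
    and mi: "maps_into I n f" and cn: "continuous_nary I n f" and sy: "symmetric_nary I n f"
    and ca: "cancellative_nary I n f" and asc: "associative_nary I n f" and aI: "a \<in> I"
begin

definition AA where "AA = replicate (n-2) a"
definition g where "g x y = f ([x,y] @ AA)"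

lemma AA_len: "length AA = n - 2" unfolding AA_def by simp
lemma AA_set: "set AA \<subseteq> I" unfolding AA_def using aI by auto

lemma fI: "xs \<in> tuples I n \<Longrightarrow> f xs \<in> I" using mi unfolding maps_into_def by blast

lemma xyA: "x\<in>I \<Longrightarrow> y\<in>I \<Longrightarrow> [x,y] @ AA \<in> tuples I n"
  unfolding tuples_def using AA_len AA_set n2 by auto

lemma gI: "x\<in>I \<Longrightarrow> y\<in>I \<Longrightarrow> g x y \<in> I" unfolding g_def using fI xyA by blast

definition E where "E W i = f (take i W @ [f (take n (drop i W))] @ drop (i + n) W)"

lemma E_const: assumes "W \<in> tuples I (2 * n - 1)" shows "i \<le> n - 1 \<Longrightarrow> E W i = E W 0"
proof (induction i)
  case 0 then show ?case by simp
next
  case (Suc i)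
  then have "i < n - 1" by simp
  then have "E W i = E W (Suc i)" using asc assms unfolding associative_nary_def E_def by blast
  then show ?case using Suc by simp
qed

lemma R3_last: assumes xs: "xs \<in> tuples I n" and y: "y \<in> I"
  shows "f (butlast xs @ [g (last xs) y]) = g (f xs) y"
proof -
  have lx: "length xs = n" and sx: "set xs \<subseteq> I" using xs unfolding tuples_def by auto
  have ne: "xs \<noteq> []" using lx n2 by auto
  define W where "W = xs @ [y] @ AA"
  have W: "W \<in> tuples I (2 * n - 1)" unfolding W_def tuples_def using lx sx y AA_len AA_set n2 by auto
  have "E W 0 = g (f xs) y" unfolding E_def W_def g_def using lx by simp
  moreover have "E W (n - 1) = f (butlast xs @ [g (last xs) y])"
  proof -
    have t: "take (n - 1) W = butlast xs" unfolding W_def using lx n2 by (simp add: butlast_conv_take)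
    have dx: "drop (n - 1) xs = [last xs]"
    proof -
      obtain ys z where e: "xs = ys @ [z]" using ne by (metis rev_exhaust)
      then show ?thesis using lx by simp
    qed
    have d: "drop (n - 1) W = [last xs, y] @ AA" unfolding W_def using lx n2 dx by simp
    have d2: "drop (n - 1 + n) W = []" unfolding W_def using lx n2 AA_len by simp
    show ?thesis unfolding E_def t d d2 g_def using AA_len n2 by simp
  qed
  ultimately show ?thesis using E_const[OF W, of "n - 1"] by simp
qed

lemma perm_tuple: assumes "xs \<in> tuples I n" "\<sigma> permutes {..<n}"
  shows "map (\<lambda>i. xs ! \<sigma> i) [0..<n] \<in> tuples I n"
  using assms unfolding tuples_iff by (auto, metis lessThan_iff permutes_in_image)

lemma upd_tuple: "xs \<in> tuples I n \<Longrightarrow> v \<in> I \<Longrightarrow> xs[k:=v] \<in> tuples I n"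
  unfolding tuples_def by (auto dest: set_update_subset_insert[THEN subsetD])

lemma R3: assumes xs: "xs \<in> tuples I n" and k: "k < n" and y: "y \<in> I"
  shows "f (xs[k := g (xs!k) y]) = g (f xs) y"
proof -
  have lx: "length xs = n" using xs unfolding tuples_def by simp
  define \<tau> where "\<tau> = Transposition.transpose k (n - 1)"
  have p: "\<tau> permutes {..<n}" unfolding \<tau>_def using k n2 by (intro permutes_swap_id) auto
  define ys where "ys = map (\<lambda>i. xs ! \<tau> i) [0..<n]"
  have ys: "ys \<in> tuples I n" unfolding ys_def by (rule perm_tuple[OF xs p])
  have fys: "f ys = f xs" using sy xs p unfolding symmetric_nary_def ys_def by blast
  have xk: "xs ! k \<in> I" using xs k unfolding tuples_iff by simp
  define v where "v = g (xs!k) y"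
  have vI: "v \<in> I" unfolding v_def using gI xk y by simp
  have xs': "xs[k:=v] \<in> tuples I n" by (rule upd_tuple[OF xs vI])
  have f': "f (map (\<lambda>i. xs[k:=v] ! \<tau> i) [0..<n]) = f (xs[k:=v])"
    using sy xs' p unfolding symmetric_nary_def by blast
  have tau_last: "\<tau> (n - 1) = k" unfolding \<tau>_def by simp
  have tau_ne: "\<tau> i \<noteq> k" if "i < n - 1" for i
    using that k unfolding \<tau>_def by (auto simp: Transposition.transpose_def split: if_splits)
  have tau_lt: "\<tau> i < n" if "i < n" for i using p that by (metis lessThan_iff permutes_in_image)
  have eq: "map (\<lambda>i. xs[k:=v] ! \<tau> i) [0..<n] = butlast ys @ [v]"
  proof (rule nth_equalityI)
    show "length (map (\<lambda>i. xs[k:=v] ! \<tau> i) [0..<n]) = length (butlast ys @ [v])"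
      unfolding ys_def using n2 by simp
  next
    fix i assume "i < length (map (\<lambda>i. xs[k:=v] ! \<tau> i) [0..<n])"
    then have i: "i < n" by simp
    show "map (\<lambda>i. xs[k:=v] ! \<tau> i) [0..<n] ! i = (butlast ys @ [v]) ! i"
    proof (cases "i = n - 1")
      case True
      then show ?thesis using n2 tau_last lx k unfolding ys_def by (simp add: nth_append)
    next
      case False
      then have i': "i < n - 1" using i by simp
      then show ?thesis using tau_ne[OF i'] lx i unfolding ys_def by (simp add: nth_append nth_butlast)
    qed
  qed
  have lastys: "last ys = xs ! k" unfolding ys_def using n2 tau_last by (simp add: last_conv_nth)
  have "f (xs[k:=v]) = f (butlast ys @ [g (last ys) y])" using f' eq lastys unfolding v_def by simp
  also have "\<dots> = g (f ys) y" by (rule R3_last[OF ys y])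
  finally show ?thesis unfolding v_def fys .
qed

lemma g_comm: assumes "x\<in>I" "y\<in>I" shows "g x y = g y x"
proof -
  define \<tau> where "\<tau> = Transposition.transpose (0::nat) 1"
  have p: "\<tau> permutes {..<n}" unfolding \<tau>_def using n2 by (intro permutes_swap_id) auto
  have "f (map (\<lambda>i. ([x,y] @ AA) ! \<tau> i) [0..<n]) = f ([x,y] @ AA)"
    using sy xyA[OF assms] p unfolding symmetric_nary_def by blast
  moreover have "map (\<lambda>i. ([x,y] @ AA) ! \<tau> i) [0..<n] = [y,x] @ AA"
  proof (rule nth_equalityI)
    show "length (map (\<lambda>i. ([x,y] @ AA) ! \<tau> i) [0..<n]) = length ([y,x] @ AA)" using AA_len n2 by simp
  next
    fix i assume "i < length (map (\<lambda>i. ([x,y] @ AA) ! \<tau> i) [0..<n])"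
    then have i: "i < n" by simp
    show "map (\<lambda>i. ([x,y] @ AA) ! \<tau> i) [0..<n] ! i = ([y,x] @ AA) ! i"
    proof (cases "i < 2")
      case True
      then show ?thesis using i unfolding \<tau>_def by (cases i) (auto simp: Transposition.transpose_def)
    next
      case False
      then have "\<tau> i = i" unfolding \<tau>_def by (auto simp: Transposition.transpose_def)
      then show ?thesis using i False by (simp add: nth_append)
    qed
  qed
  ultimately show ?thesis unfolding g_def by simp
qed

lemma g_assoc: assumes "x\<in>I" "y\<in>I" "z\<in>I" shows "g (g x y) z = g x (g y z)"
proof -
  have "f (([x,y] @ AA)[1 := g (([x,y] @ AA)!1) z]) = g (f ([x,y] @ AA)) z"
    using R3[OF xyA[OF assms(1,2)] _ assms(3), of 1] n2 by simp
  then show ?thesis unfolding g_def[of x y] by (simp add: g_def)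
qed

lemma g_canc: assumes "x\<in>I" "y\<in>I" "z\<in>I" "g x z = g y z" shows "x = y"
proof -
  have e: "\<forall>i<n. i \<noteq> 0 \<longrightarrow> ([x,z] @ AA) ! i = ([y,z] @ AA) ! i"
  proof (intro allI impI)
    fix i assume "i < n" "i \<noteq> 0"
    then obtain j where "i = Suc j" by (cases i) auto
    then show "([x,z] @ AA) ! i = ([y,z] @ AA) ! i" by simp
  qed
  have "([x,z] @ AA) ! 0 = ([y,z] @ AA) ! 0"
    using ca[unfolded cancellative_nary_def, rule_format, of 0 "[x,z]@AA" "[y,z]@AA"]
      xyA[OF assms(1,3)] xyA[OF assms(2,3)] assms(4) n2 e unfolding g_def by simp
  then show ?thesis by simp
qed

lemma g_cont: "continuous_on (I\<times>I) (\<lambda>p. g (fst p) (snd p))"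
  unfolding continuous_on_iff
proof (intro ballI allI impI)
  fix p0 :: "real\<times>real" and e :: real assume p0: "p0 \<in> I\<times>I" and e: "0 < e"
  obtain x0 y0 where pp: "p0 = (x0,y0)" by (cases p0) auto
  have xs: "[x0,y0] @ AA \<in> tuples I n" using xyA p0 pp by auto
  obtain d where d: "d > 0" "\<forall>ys\<in>tuples I n. (\<forall>i<n. \<bar>ys ! i - ([x0,y0] @ AA) ! i\<bar> < d) \<longrightarrow>
      \<bar>f ys - f ([x0,y0] @ AA)\<bar> < e"
    using cn xs e unfolding continuous_nary_def by blast
  show "\<exists>d>0. \<forall>p\<in>I\<times>I. dist p p0 < d \<longrightarrow> dist (g (fst p) (snd p)) (g (fst p0) (snd p0)) < e"
  proof (intro exI[of _ d] conjI ballI impI)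
    show "d > 0" by fact
  next
    fix p :: "real\<times>real" assume p: "p \<in> I\<times>I" "dist p p0 < d"
    obtain x y where qq: "p = (x,y)" by (cases p) auto
    have "dist x x0 < d" using p qq pp dist_fst_le[of p p0] by simp
    moreover have "dist y y0 < d" using p qq pp dist_snd_le[of p p0] by simp
    ultimately have "\<forall>i<n. \<bar>([x,y] @ AA) ! i - ([x0,y0] @ AA) ! i\<bar> < d"
      using d(1) by (auto simp: nth_append nth_Cons dist_real_def split: nat.splits)
    then have "\<bar>f ([x,y] @ AA) - f ([x0,y0] @ AA)\<bar> < e" using d(2) xyA p qq by auto
    then show "dist (g (fst p) (snd p)) (g (fst p0) (snd p0)) < e" unfolding qq pp g_def dist_real_def by simp
  qed
qed

lemma psi_ex: "\<exists>psi::real\<Rightarrow>real. continuous_on I psi \<and> strict_mono_on I psi \<and> (\<forall>x\<in>I. \<forall>y\<in>I. psi (g x y) = psi x + psi y)"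
  by (rule aczel[OF iv nt gI g_comm g_assoc g_canc g_cont])

lemma D_inv:
  fixes psi :: "real \<Rightarrow> real"
  assumes add: "\<forall>x\<in>I. \<forall>y\<in>I. psi (g x y) = psi x + psi y"
    and xs: "xs \<in> tuples I n" and k: "k < n" and y: "y \<in> I"
  shows "psi (f (xs[k := g (xs!k) y])) - sum_list (map psi (xs[k := g (xs!k) y]))
       = psi (f xs) - sum_list (map psi xs)"
proof -
  have lx: "length xs = n" using xs unfolding tuples_def by simp
  have xk: "xs ! k \<in> I" using xs k unfolding tuples_iff by simp
  have "sum_list (map psi (xs[k := g (xs!k) y])) + psi (xs!k) = sum_list (map psi xs) + psi (g (xs!k) y)"
    using sum_list_upd[of k xs psi] k lx by simp
  moreover have "psi (g (xs!k) y) = psi (xs!k) + psi y" using add xk y by simp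
  moreover have "psi (f (xs[k := g (xs!k) y])) = psi (f xs) + psi y" using R3[OF xs k y] add fI[OF xs] y by simp
  ultimately show ?thesis by simp
qed

lemma D_map:
  fixes psi :: "real \<Rightarrow> real"
  assumes add: "\<forall>x\<in>I. \<forall>y\<in>I. psi (g x y) = psi x + psi y"
    and ws: "ws \<in> tuples I n" and zs: "zs \<in> tuples I n"
  shows "psi (f (map (\<lambda>i. g (ws!i) (zs!i)) [0..<n])) - sum_list (map psi (map (\<lambda>i. g (ws!i) (zs!i)) [0..<n]))
       = psi (f ws) - sum_list (map psi ws)"
proof -
  define D where "D xs = psi (f xs) - sum_list (map psi xs)" for xs
  define U where "U m = map (\<lambda>i. if i < m then g (ws!i) (zs!i) else ws!i) [0..<n]" for m
  have lw: "length ws = n" using ws unfolding tuples_def by simp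
  have wI: "ws ! i \<in> I" if "i < n" for i using ws that unfolding tuples_iff by simp
  have zI: "zs ! i \<in> I" if "i < n" for i using zs that unfolding tuples_iff by simp
  have UI: "U m \<in> tuples I n" for m unfolding U_def tuples_iff using wI zI gI by auto
  have "m \<le> n \<Longrightarrow> D (U m) = D ws" for m
  proof (induction m)
    case 0
    have "U 0 = ws" unfolding U_def using lw map_nth[of ws] by simp
    then show ?case by simp
  next
    case (Suc m)
    then have m: "m < n" by simp
    have "U (Suc m) = (U m)[m := g ((U m)!m) (zs!m)]"
      unfolding U_def using m by (intro nth_equalityI) (auto simp: nth_list_update)
    then have "D (U (Suc m)) = D (U m)" unfolding D_def using D_inv[OF add UI m zI[OF m]] by simp
    then show ?case using Suc by simp
  qed
  from this[of n] have "D (U n) = D ws" by simp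
  moreover have "U n = map (\<lambda>i. g (ws!i) (zs!i)) [0..<n]" unfolding U_def by simp
  ultimately show ?thesis unfolding D_def by simp
qed

lemma forward: "\<exists>\<phi> J. represents I n f \<phi> J \<and> strict_mono_on I \<phi>"
proof -
  obtain psi :: "real \<Rightarrow> real" where cpsi: "continuous_on I psi" and spsi: "strict_mono_on I psi"
    and add: "\<forall>x\<in>I. \<forall>y\<in>I. psi (g x y) = psi x + psi y" using psi_ex by blast
  define D where "D xs = psi (f xs) - sum_list (map psi xs)" for xs
  define R where "R = replicate n a"
  have R: "R \<in> tuples I n" unfolding R_def tuples_def using aI by auto
  have Dc: "D xs = D R" if xs: "xs \<in> tuples I n" for xs
  proof -
    have lx: "length xs = n" using xs unfolding tuples_def by simp
    have "D xs = D (map (\<lambda>i. g (xs!i) (R!i)) [0..<n])" unfolding D_def using D_map[OF add xs R] by simp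
    also have "map (\<lambda>i. g (xs!i) (R!i)) [0..<n] = map (\<lambda>i. g (R!i) (xs!i)) [0..<n]"
      using g_comm xs aI unfolding R_def tuples_iff by simp
    also have "D (map (\<lambda>i. g (R!i) (xs!i)) [0..<n]) = D R" unfolding D_def using D_map[OF add R xs] by simp
    finally show ?thesis .
  qed
  define c where "c = D R / (real n - 1)"
  define \<phi> where "\<phi> x = psi x + c" for x
  have n1: "real n - 1 > 0" using n2 by simp
  have key: "\<phi> (f xs) = sum_list (map \<phi> xs)" if xs: "xs \<in> tuples I n" for xs
  proof -
    have lx: "length xs = n" using xs unfolding tuples_def by simp
    have "psi (f xs) = sum_list (map psi xs) + D R" using Dc[OF xs] unfolding D_def by simp
    moreover have "sum_list (map \<phi> xs) = sum_list (map psi xs) + real n * c"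
      unfolding \<phi>_def using sum_list_addc[of psi c xs] lx by simp
    moreover have "D R + c = real n * c" unfolding c_def using n1 by (simp add: field_simps)
    ultimately show ?thesis unfolding \<phi>_def by simp
  qed
  define J where "J = \<phi> ` I"
  have sphi: "strict_mono_on I \<phi>" using spsi unfolding strict_mono_on_def \<phi>_def by simp
  have cphi: "continuous_on I \<phi>" unfolding \<phi>_def by (intro continuous_on_add cpsi continuous_on_const)
  have injphi: "inj_on \<phi> I" using sphi by (rule strict_mono_on_imp_inj_on)
  have bij: "bij_betw \<phi> I J" unfolding J_def using injphi by (simp add: bij_betw_def)
  have ivJ: "is_interval J" unfolding J_def
    using connected_continuous_image[OF cphi is_interval_connected[OF iv]] is_interval_connected_1 by blast
  have ntJ: "\<exists>p\<in>J. \<exists>q\<in>J. p < q" using nt sphi unfolding J_def strict_mono_on_def by blast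
  have clJ: "real n * p \<in> J" if pJ: "p \<in> J" for p
  proof -
    obtain x where x: "x \<in> I" "p = \<phi> x" using pJ unfolding J_def by blast
    have Rx: "replicate n x \<in> tuples I n" unfolding tuples_def using x by auto
    have "\<phi> (f (replicate n x)) = real n * p" using key[OF Rx] x sum_list_rep[of \<phi> n x] by simp
    then show ?thesis using fI[OF Rx] unfolding J_def by (metis image_eqI)
  qed
  have adm: "admissible_J J" by (rule adm_from[OF ivJ ntJ clJ n2])
  have rep: "\<forall>xs\<in>tuples I n. f xs = inv_into I \<phi> (sum_list (map \<phi> xs))"
    using key fI injphi by (metis inv_into_f_f)
  show ?thesis unfolding represents_def using adm cphi bij rep sphi by blast
qed

end

theorem mainTheorem1:
  fixes I :: "real set" and n :: nat and f :: "real list \<Rightarrow> real"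
  assumes "is_interval I" and "\<exists>x\<in>I. \<exists>y\<in>I. x < y"
    and "n \<ge> 2"
    and "maps_into I n f"
  shows "((continuous_nary I n f \<and> symmetric_nary I n f \<and> cancellative_nary I n f
            \<and> associative_nary I n f)
         \<longleftrightarrow> (\<exists>\<phi> J. represents I n f \<phi> J \<and> (strict_mono_on I \<phi> \<or> strict_antimono_on I \<phi>)))
     \<and> (continuous_nary I n f \<and> symmetric_nary I n f \<and> cancellative_nary I n f
            \<and> associative_nary I n f \<longrightarrow>
         ((\<nexists>m. m \<in> I \<and> (\<forall>x\<in>I. x \<le> m)) \<or> (\<nexists>m. m \<in> I \<and> (\<forall>x\<in>I. m \<le> x)))
         \<and> (\<exists>\<phi> J. represents I n f \<phi> J \<and> strict_mono_on I \<phi>))"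
proof -
  note iv = assms(1) and nt = assms(2) and n2 = assms(3) and mi = assms(4)
  define P where "P \<longleftrightarrow> continuous_nary I n f \<and> symmetric_nary I n f \<and> cancellative_nary I n f
            \<and> associative_nary I n f"
  have fw: "\<exists>\<phi> J. represents I n f \<phi> J \<and> strict_mono_on I \<phi>" if P
  proof -
    obtain a where aI: "a \<in> I" using nt by blast
    have "nsg I n f a" using iv nt n2 mi aI \<open>P\<close> unfolding P_def by unfold_locales auto
    then show ?thesis by (rule nsg.forward)
  qed
  have bw: P if ex: "\<exists>\<phi> J. represents I n f \<phi> J \<and> (strict_mono_on I \<phi> \<or> strict_antimono_on I \<phi>)"
  proof -
    obtain \<phi> J where rep: "represents I n f \<phi> J" and m: "strict_mono_on I \<phi> \<or> strict_antimono_on I \<phi>"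
      using ex by blast
    have n1: "n \<ge> 1" using n2 by simp
    show ?thesis
    proof (cases "strict_mono_on I \<phi>")
      case True
      then show ?thesis using rev_props[OF iv n1 rep] unfolding P_def by blast
    next
      case False
      then have "strict_antimono_on I \<phi>" using m by simp
      then have "strict_mono_on I (\<lambda>x. - \<phi> x)" unfolding monotone_on_def by simp
      then show ?thesis using rev_props[OF iv n1 rep_neg[OF rep]] unfolding P_def by blast
    qed
  qed
  have op: "(\<nexists>m. m \<in> I \<and> (\<forall>x\<in>I. x \<le> m)) \<or> (\<nexists>m. m \<in> I \<and> (\<forall>x\<in>I. m \<le> x))"
    if rep: "represents I n f \<phi> J" and sm: "strict_mono_on I \<phi>" for \<phi> J
  proof (rule ccontr)
    assume "\<not> ?thesis"
    then obtain M m where M: "M \<in> I" "\<forall>x\<in>I. x \<le> M" and m: "m \<in> I" "\<forall>x\<in>I. m \<le> x" by blast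
    have adm: "admissible_J J" and bij: "bij_betw \<phi> I J" using rep unfolding represents_def by auto
    have mono: "\<phi> x \<le> \<phi> y" if "x \<in> I" "y \<in> I" "x \<le> y" for x y
      using sm that unfolding strict_mono_on_def by (cases "x = y") (auto intro: less_imp_le)
    have bd: "\<phi> m \<le> j \<and> j \<le> \<phi> M" if "j \<in> J" for j
    proof -
      obtain x where "x \<in> I" "j = \<phi> x" using \<open>j \<in> J\<close> bij unfolding bij_betw_def by blast
      then show ?thesis using mono M m by simp
    qed
    have "(\<exists>j\<in>J. j < \<phi> m) \<or> (\<exists>j\<in>J. j > \<phi> M)"
      using adm unfolding admissible_J_def
    proof (elim disjE exE conjE)
      fix b :: real assume "J = {..<b}" then show ?thesis by (intro disjI1 bexI[of _ "min b (\<phi> m) - 1"]) auto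
    next
      fix b :: real assume "J = {..b}" then show ?thesis by (intro disjI1 bexI[of _ "min b (\<phi> m) - 1"]) auto
    next
      fix a :: real assume "J = {a<..}" then show ?thesis by (intro disjI2 bexI[of _ "max a (\<phi> M) + 1"]) auto
    next
      fix a :: real assume "J = {a..}" then show ?thesis by (intro disjI2 bexI[of _ "max a (\<phi> M) + 1"]) auto
    next
      assume "J = UNIV" then show ?thesis by (intro disjI1 bexI[of _ "\<phi> m - 1"]) auto
    qed
    then show False using bd by force
  qed
  show ?thesis unfolding P_def[symmetric] using fw bw op by blast
qed

end
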